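(* Let $q$ be a prime power and let $C\subseteq \mathrm{GF}(q^m)^n$ be a (linear or nonlinear) code containing the all-zero vector, with $n\le m$, $|C|=q^{mk}$ for an integer $1\le k\le n$, and minimum rank distance $d_{\mathrm R}=n-k+1$. Let $r=n-k$ and $t=\lfloor (d_{\mathrm R}-1)/2\rfloor$. For an integer $u$ with $d_{\mathrm R}-t\le u<d_{\mathrm R}$, let $D_u$ be the number of vectors $\mathbf y\in\mathrm{GF}(q^m)^n$ of rank $u$ for which there is a codeword $\mathbf c\in C$ with $\mathrm{rk}(\mathbf y-\mathbf c)\le t$. Then $$D_u<\frac{q^2}{q^2-1}{n\brack u}(q^m-1)^{u-r}V_t,$$ where $V_t=\sum_{i=0}^{t}N_i$.
   Context: $A(m,0)=1$ and $A(m,u)=\prod_{i=0}^{u-1}(q^m-q^i)$ for $u\ge1$; ${n\brack u}=A(n,u)/A(u,u)$ is the Gaussian binomial. For $\mathbf x=(x_0,\dots,x_{n-1})\in\mathrm{GF}(q^m)^n$, $\mathrm{rk}(\mathbf x)$ is the dimension over $\mathrm{GF}(q)$ of the $\mathrm{GF}(q)$-span of its coordinates (equivalently the rank of the $m\times n$ expansion matrix over $\mathrm{GF}(q)$). $N_i={n\brack i}A(m,i)$ is the number of vectors of rank $i$ in $\mathrm{GF}(q^m)^n$. The minimum rank distance of $C$ is the minimum of $\mathrm{rk}(\mathbf c-\mathbf d)$ over distinct codewords. *)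

theory Defs
  imports Complex_Main "HOL-Computational_Algebra.Primes"
begin

text \<open>Ambient field: a finite field type 'a with CARD('a) = q^m, i.e. GF(q^m).
  The subfield GF(q) inside it is the set of fixed points of the q-Frobenius.\<close>

definition base_field :: "nat \<Rightarrow> ('a::field) set" where
  "base_field q = {x. x ^ q = x}"

definition indep_over :: "'a::field set \<Rightarrow> (nat \<Rightarrow> 'a) \<Rightarrow> nat set \<Rightarrow> bool" where
  "indep_over F0 v J \<longleftrightarrow>
     (\<forall>c. (\<forall>j\<in>J. c j \<in> F0) \<longrightarrow> (\<Sum>j\<in>J. c j * v j) = 0 \<longrightarrow> (\<forall>j\<in>J. c j = 0))"

text \<open>Rank of a vector: dimension over F0 of the F0-span of its coordinates
  (= maximal number of F0-linearly independent coordinates).\<close>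
definition rk :: "'a::field set \<Rightarrow> 'a list \<Rightarrow> nat" where
  "rk F0 xs = Max {card J | J. J \<subseteq> {0..<length xs} \<and> indep_over F0 (nth xs) J}"

definition vdiff :: "'a::field list \<Rightarrow> 'a list \<Rightarrow> 'a list" where
  "vdiff x y = map2 (-) x y"

definition min_rank_dist :: "'a::field set \<Rightarrow> 'a list set \<Rightarrow> nat" where
  "min_rank_dist F0 C = Min {rk F0 (vdiff c d) | c d. c \<in> C \<and> d \<in> C \<and> c \<noteq> d}"

definition A_fun :: "nat \<Rightarrow> nat \<Rightarrow> nat \<Rightarrow> real" where
  "A_fun q m u = (\<Prod>i<u. (real q ^ m - real q ^ i))"

definition gauss_binom :: "nat \<Rightarrow> nat \<Rightarrow> nat \<Rightarrow> real" where
  "gauss_binom q n u = A_fun q n u / A_fun q u u"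

definition N_rank :: "nat \<Rightarrow> nat \<Rightarrow> nat \<Rightarrow> nat \<Rightarrow> real" where
  "N_rank q m n i = gauss_binom q n i * A_fun q m i"

definition V_ball :: "nat \<Rightarrow> nat \<Rightarrow> nat \<Rightarrow> nat \<Rightarrow> real" where
  "V_ball q m n t = (\<Sum>i\<le>t. N_rank q m n i)"

end

theory Submission
  imports Defs "HOL-Computational_Algebra.Polynomial" "HOL-Library.Function_Algebras" "HOL-Number_Theory.Residues"
begin

lemma card_fibers:
  assumes "finite A"
  shows "card A = (\<Sum>y\<in>g ` A. card {x\<in>A. g x = y})"
  using sum.image_gen[OF assms, of "\<lambda>_. (1::nat)" g] by (simp add: card_eq_sum[symmetric])

lemma power_card_same:
  fixes x :: "'a::{finite,field}"
  shows "x ^ card (UNIV :: 'a set) = x"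
proof (cases "x = 0")
  case False
  have "x * (\<Prod>y\<in>UNIV-{0}. x * y) = x * x ^ (card (UNIV :: 'a set) - 1) * \<Prod>(UNIV-{0})"
    by (simp add: prod.distrib mult_ac)
  also have "x * x ^ (card (UNIV :: 'a set) - 1) = x ^ Suc (card (UNIV :: 'a set) - 1)"
    by (subst power_Suc) auto
  also have "Suc (card (UNIV :: 'a set) - 1) = card (UNIV :: 'a set)"
    using finite_UNIV_card_ge_0[where ?'a = 'a] by simp
  also have "(\<Prod>y\<in>UNIV-{0}. x * y) = (\<Prod>y\<in>UNIV-{0}. y)"
    by (rule prod.reindex_bij_witness[of _ "\<lambda>y. y / x" "\<lambda>y. x * y"]) (use False in auto)
  finally show ?thesis
    by simp
qed (use finite_UNIV_card_ge_0[where ?'a = 'a] in auto)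

locale ffield =
  fixes p e q m :: nat
  assumes p: "prime p" and e: "e \<ge> 1" and qdef: "q = p ^ e" and m: "m \<ge> 1"
    and cardA: "card (UNIV :: 'a::{finite,field} set) = q ^ m"
begin

abbreviation FF :: "'a set" where "FF \<equiv> base_field q"

lemma q_ge2: "q \<ge> 2"
proof -
  have "p \<ge> 2" using p prime_ge_2_nat by blast
  have "p ^ 1 \<le> p ^ e" using e \<open>p \<ge> 2\<close> by (intro power_increasing) auto
  thus ?thesis using \<open>p \<ge> 2\<close> qdef by simp
qed

lemma char_p: "CHAR('a) = p"
proof -
  have pos: "CHAR('a) > 0" using finite_imp_CHAR_pos[where 'a='a] by simp
  have pr: "prime CHAR('a)" using prime_CHAR_semidom[OF pos] .
  have "CHAR('a) dvd p ^ (e * m)" using CHAR_dvd_CARD[where 'a='a] cardA qdef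
    by (simp add: power_mult)
  hence "CHAR('a) dvd p" using prime_dvd_power[OF pr] by blast
  thus ?thesis using primes_dvd_imp_eq[OF pr p] by simp
qed

lemma frob_add: "(x + y :: 'a) ^ (p ^ j) = x ^ (p ^ j) + y ^ (p ^ j)"
  using freshmans_dream'[of "p ^ j" j x y] char_p p by simp

lemma frob_diff: "(x - y :: 'a) ^ (p ^ j) = x ^ (p ^ j) - y ^ (p ^ j)"
proof -
  have "((x - y) + y) ^ (p ^ j) = (x - y) ^ (p ^ j) + y ^ (p ^ j)" by (rule frob_add)
  thus ?thesis by (simp add: algebra_simps)
qed

lemma q_pow: "q ^ j = p ^ (e * j)" by (simp add: qdef power_mult)

lemma frobq_add: "(x + y :: 'a) ^ (q ^ j) = x ^ (q ^ j) + y ^ (q ^ j)"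
  unfolding q_pow by (rule frob_add)
lemma frobq_diff: "(x - y :: 'a) ^ (q ^ j) = x ^ (q ^ j) - y ^ (q ^ j)"
  unfolding q_pow by (rule frob_diff)

lemma FF_mem: "x \<in> FF \<longleftrightarrow> x ^ q = x" by (simp add: base_field_def)

lemma FF_0: "0 \<in> FF" using q_ge2 by (simp add: FF_mem)
lemma FF_1: "1 \<in> FF" by (simp add: FF_mem)
lemma FF_add: "x \<in> FF \<Longrightarrow> y \<in> FF \<Longrightarrow> x + y \<in> FF"
  using frobq_add[of x y 1] by (simp add: FF_mem)
lemma FF_diff: "x \<in> FF \<Longrightarrow> y \<in> FF \<Longrightarrow> x - y \<in> FF"
  using frobq_diff[of x y 1] by (simp add: FF_mem)
lemma FF_uminus: "x \<in> FF \<Longrightarrow> - x \<in> FF"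
  using FF_diff[OF FF_0, of x] by simp
lemma FF_mult: "x \<in> FF \<Longrightarrow> y \<in> FF \<Longrightarrow> x * y \<in> FF"
  by (simp add: FF_mem power_mult_distrib)
lemma FF_inverse: "x \<in> FF \<Longrightarrow> inverse x \<in> FF"
  by (simp add: FF_mem power_inverse)

lemma FF_sum: "(\<And>i. i \<in> I \<Longrightarrow> f i \<in> FF) \<Longrightarrow> sum f I \<in> FF"
  by (induction I rule: infinite_finite_induct) (auto simp: FF_0 FF_add)

lemma pow_qm: "(x::'a) ^ (q ^ m) = x"
  using power_card_same[of x] cardA by simp

lemma card_FF_le: "card FF \<le> q"
proof -
  define P :: "'a poly" where "P = Polynomial.monom 1 q - Polynomial.monom 1 1"
  have deg: "degree P = q"
  proof (rule antisym)
    show "degree P \<le> q" unfolding P_def using q_ge2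
      by (intro degree_diff_le) (auto intro: order_trans[OF degree_monom_le])
    have "Polynomial.coeff P q = 1" using q_ge2 by (simp add: P_def)
    thus "q \<le> degree P" by (intro le_degree) simp
  qed
  hence "P \<noteq> 0" using q_ge2 by auto
  have "FF = {x. poly P x = 0}" by (auto simp: P_def FF_mem poly_monom)
  thus ?thesis using card_poly_roots_bound[OF \<open>P \<noteq> 0\<close>] deg by simp
qed

lemma card_FF_ge: "card FF \<ge> q"
proof -
  define D :: "'a \<Rightarrow> 'a" where "D x = x ^ q - x" for x
  define T :: "'a poly" where "T = (\<Sum>i<m. Polynomial.monom 1 (q ^ i))"
  have inj: "inj_on (\<lambda>i. q ^ i) UNIV" using q_ge2 by (intro inj_onI) simp
  have coeffT: "Polynomial.coeff T (q ^ (m - 1)) = 1"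
  proof -
    have "Polynomial.coeff T (q ^ (m - 1)) = (\<Sum>i<m. if q ^ i = q ^ (m - 1) then 1 else 0)"
      by (simp add: T_def coeff_sum)
    also have "\<dots> = (\<Sum>i\<in>{m - 1}. 1)"
      using m q_ge2 by (intro sum.mono_neutral_cong_right) auto
    finally show ?thesis by simp
  qed
  hence "T \<noteq> 0" by auto
  have degT: "degree T \<le> q ^ (m - 1)"
    unfolding T_def
  proof (rule degree_sum_le)
    fix i assume "i \<in> {..<m}"
    hence "q ^ i \<le> q ^ (m - 1)" using q_ge2 by (intro power_increasing) auto
    thus "degree (Polynomial.monom (1::'a) (q ^ i)) \<le> q ^ (m - 1)" using degree_monom_le order_trans by blast
  qed simp
  have polyT: "poly T x = (\<Sum>i<m. x ^ (q ^ i))" for x by (simp add: T_def poly_sum poly_monom)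
  have TD: "poly T (D x) = 0" for x
  proof -
    have "poly T (D x) = (\<Sum>i<m. x ^ (q ^ Suc i) - x ^ (q ^ i))"
      by (simp add: polyT D_def frobq_diff power_mult[symmetric] mult.commute)
    also have "\<dots> = x ^ (q ^ m) - x ^ (q ^ 0)" by (rule sum_lessThan_telescope)
    finally show ?thesis by (simp add: pow_qm)
  qed
  have imgle: "card (D ` UNIV) \<le> q ^ (m - 1)"
  proof -
    have "D ` UNIV \<subseteq> {x. poly T x = 0}" using TD by auto
    hence "card (D ` UNIV) \<le> card {x. poly T x = 0}" by (intro card_mono) auto
    also have "\<dots> \<le> q ^ (m - 1)" using card_poly_roots_bound[OF \<open>T \<noteq> 0\<close>] degT by simp
    finally show ?thesis .
  qed
  have fib: "card {x. D x = y} = card FF" if "y \<in> D ` UNIV" for y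
  proof -
    obtain x0 where y: "y = D x0" using \<open>y \<in> D ` UNIV\<close> by auto
    have Dd: "D x - D x0 = D (x - x0)" for x
      using frobq_diff[of x x0 1] by (simp add: D_def algebra_simps)
    have "{x. D x = y} = (\<lambda>f. f + x0) ` FF"
    proof (rule equalityI; rule subsetI)
      fix x assume "x \<in> {x. D x = y}"
      hence "D (x - x0) = 0" using Dd[of x] y by simp
      hence "x - x0 \<in> FF" by (simp add: D_def FF_mem)
      thus "x \<in> (\<lambda>f. f + x0) ` FF" by (intro image_eqI[of _ _ "x - x0"]) auto
    next
      fix x assume "x \<in> (\<lambda>f. f + x0) ` FF"
      then obtain f where "f \<in> FF" "x = f + x0" by auto
      thus "x \<in> {x. D x = y}" using y frobq_add[of f x0 1] by (simp add: D_def FF_mem)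
    qed
    thus ?thesis by (simp add: card_image inj_on_def)
  qed
  have "q ^ m = card (UNIV :: 'a set)" using cardA by simp
  also have "\<dots> = (\<Sum>y\<in>D ` UNIV. card {x\<in>UNIV. D x = y})" by (rule card_fibers) simp
  also have "\<dots> = card (D ` UNIV) * card FF" using fib by simp
  also have "\<dots> \<le> q ^ (m - 1) * card FF" using imgle by simp
  finally have "q * q ^ (m - 1) \<le> q ^ (m - 1) * card FF"
    using m by (metis Suc_pred' less_le_trans power_Suc zero_less_one le_refl m)
  thus ?thesis using q_ge2 by (simp add: mult.commute)
qed

lemma card_FF: "card FF = q" using card_FF_le card_FF_ge by simp

end

definition sumset :: "'v::ab_group_add set \<Rightarrow> 'v set \<Rightarrow> 'v set" where
  "sumset A B = {a + b | a b. a \<in> A \<and> b \<in> B}"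

lemma sumset_commute: "sumset A B = sumset B A"
  unfolding sumset_def by (auto; rule_tac x=b in exI, rule_tac x=a in exI; simp add: add.commute)

locale fspace =
  fixes FS :: "'a::field set" and qq :: nat and sc :: "'a \<Rightarrow> 'v::ab_group_add \<Rightarrow> 'v"
  assumes FS_0: "0 \<in> FS" and FS_1: "1 \<in> FS"
    and FS_add: "a \<in> FS \<Longrightarrow> b \<in> FS \<Longrightarrow> a + b \<in> FS"
    and FS_uminus: "a \<in> FS \<Longrightarrow> - a \<in> FS"
    and FS_mult: "a \<in> FS \<Longrightarrow> b \<in> FS \<Longrightarrow> a * b \<in> FS"
    and FS_inverse: "a \<in> FS \<Longrightarrow> inverse a \<in> FS"
    and finite_FS: "finite FS" and card_FS: "card FS = qq"
    and sc_add_right: "sc a (x + y) = sc a x + sc a y"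
    and sc_add_left: "sc (a + b) x = sc a x + sc b x"
    and sc_mult: "sc a (sc b x) = sc (a * b) x"
    and sc_one: "sc 1 x = x"
begin

lemma FS_diff: assumes "a \<in> FS" "b \<in> FS" shows "a - b \<in> FS"
proof -
  have "a + - b \<in> FS" by (rule FS_add[OF assms(1) FS_uminus[OF assms(2)]])
  thus ?thesis by (simp only: diff_conv_add_uminus)
qed

lemma qq_ge2: "qq \<ge> 2"
proof -
  have "{0, 1} \<subseteq> FS" using FS_0 FS_1 by auto
  hence "card {0::'a, 1} \<le> card FS" using finite_FS by (intro card_mono) auto
  thus ?thesis using card_FS by simp
qed

lemma sc_zero_left [simp]: "sc 0 x = 0"
  using sc_add_left[of 0 0 x] by simp
lemma sc_zero_right [simp]: "sc a 0 = 0"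
  using sc_add_right[of a 0 0] by simp
lemma sc_minus_left: "sc (- a) x = - sc a x"
proof -
  have "sc a x + sc (- a) x = 0" using sc_add_left[of a "- a" x] by simp
  hence "- sc a x = sc (- a) x" by (rule add.inverse_unique)
  thus ?thesis by simp
qed
lemma sc_minus_right: "sc a (- x) = - sc a x"
proof -
  have "sc a x + sc a (- x) = 0" using sc_add_right[of a x "- x"] by simp
  hence "- sc a x = sc a (- x)" by (rule add.inverse_unique)
  thus ?thesis by simp
qed
lemma sc_diff_left: "sc (a - b) x = sc a x - sc b x"
  by (simp only: diff_conv_add_uminus sc_add_left sc_minus_left)
lemma sc_diff_right: "sc a (x - y) = sc a x - sc a y"
  by (simp only: diff_conv_add_uminus sc_add_right sc_minus_right)
lemma sc_sum_right: "sc a (sum f I) = (\<Sum>i\<in>I. sc a (f i))"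
  by (induction I rule: infinite_finite_induct) (auto simp: sc_add_right)

definition subsp :: "'v set \<Rightarrow> bool" where
  "subsp S \<longleftrightarrow> 0 \<in> S \<and> (\<forall>x\<in>S. \<forall>y\<in>S. x + y \<in> S) \<and> (\<forall>a\<in>FS. \<forall>x\<in>S. sc a x \<in> S)"

lemma subspD:
  assumes "subsp S"
  shows "0 \<in> S" "x \<in> S \<Longrightarrow> y \<in> S \<Longrightarrow> x + y \<in> S" "a \<in> FS \<Longrightarrow> x \<in> S \<Longrightarrow> sc a x \<in> S"
  using assms unfolding subsp_def by auto

lemma subsp_uminus: "subsp S \<Longrightarrow> x \<in> S \<Longrightarrow> - x \<in> S"
  using subspD(3)[of S "- 1" x] FS_uminus[OF FS_1] by (simp add: sc_minus_left sc_one)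

lemma subsp_diff: "subsp S \<Longrightarrow> x \<in> S \<Longrightarrow> y \<in> S \<Longrightarrow> x - y \<in> S"
  using subspD(2)[OF _ _ subsp_uminus] by (simp only: diff_conv_add_uminus)

lemma subsp_sum: "subsp S \<Longrightarrow> (\<And>i. i \<in> I \<Longrightarrow> f i \<in> S) \<Longrightarrow> sum f I \<in> S"
  by (induction I rule: infinite_finite_induct) (auto simp: subspD)

lemma subsp_UNIV: "subsp UNIV" by (simp add: subsp_def)

definition addv :: "'v set \<Rightarrow> 'v \<Rightarrow> 'v set" where
  "addv S x = {sc a x + y | a y. a \<in> FS \<and> y \<in> S}"

lemma addv_subsp: assumes "subsp S" shows "subsp (addv S x)"
  unfolding subsp_def
proof (intro conjI ballI)
  show "0 \<in> addv S x" unfolding addv_def using FS_0 subspD(1)[OF assms]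
    by (intro CollectI exI[of _ 0] exI[of _ "0::'v"]) simp
next
  fix y z assume "y \<in> addv S x" "z \<in> addv S x"
  then obtain a b y' z' where "a \<in> FS" "b \<in> FS" "y' \<in> S" "z' \<in> S" "y = sc a x + y'" "z = sc b x + z'"
    unfolding addv_def by auto
  thus "y + z \<in> addv S x" unfolding addv_def using FS_add subspD(2)[OF assms]
    by (intro CollectI exI[of _ "a + b"] exI[of _ "y' + z'"]) (auto simp: sc_add_left algebra_simps)
next
  fix c y assume "c \<in> FS" "y \<in> addv S x"
  then obtain a y' where "a \<in> FS" "y' \<in> S" "y = sc a x + y'" unfolding addv_def by auto
  thus "sc c y \<in> addv S x" unfolding addv_def using FS_mult \<open>c \<in> FS\<close> subspD(3)[OF assms]
    by (intro CollectI exI[of _ "c * a"] exI[of _ "sc c y'"]) (auto simp: sc_add_right sc_mult)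
qed

lemma addv_sub: "S \<subseteq> addv S x"
  unfolding addv_def using FS_0 by force

lemma addv_mem: "subsp S \<Longrightarrow> x \<in> addv S x"
  unfolding addv_def using FS_1 subspD(1)[of S] by (force simp: sc_one)

lemma addv_least: "subsp T \<Longrightarrow> S \<subseteq> T \<Longrightarrow> x \<in> T \<Longrightarrow> addv S x \<subseteq> T"
  unfolding addv_def using subspD[of T] by auto

lemma addv_in: "subsp S \<Longrightarrow> x \<in> S \<Longrightarrow> addv S x = S"
  using addv_least[of S S x] addv_sub[of S x] by auto

lemma addv_image: "addv S x = (\<lambda>(a, y). sc a x + y) ` (FS \<times> S)"
  unfolding addv_def by auto

lemma finite_addv: "finite S \<Longrightarrow> finite (addv S x)"
  unfolding addv_image using finite_FS by simp

lemma card_addv: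
  assumes S: "subsp S" "finite S" and x: "x \<notin> S"
  shows "card (addv S x) = qq * card S"
proof -
  have "inj_on (\<lambda>(a, y). sc a x + y) (FS \<times> S)"
  proof (rule inj_onI, clarify)
    fix a y b z assume ab: "a \<in> FS" "y \<in> S" "b \<in> FS" "z \<in> S" and eq: "sc a x + y = sc b x + z"
    have "sc (a - b) x = z - y" using eq by (simp add: sc_diff_left algebra_simps)
    show "a = b \<and> y = z"
    proof (cases "a = b")
      case True thus ?thesis using eq by simp
    next
      case False
      have "z - y \<in> S" using subsp_diff[OF S(1)] ab by simp
      hence "sc (inverse (a - b)) (sc (a - b) x) \<in> S"
        using subspD(3)[OF S(1) FS_inverse[OF FS_diff[OF ab(1,3)]]] \<open>sc (a - b) x = z - y\<close> by simp
      hence "x \<in> S" using False by (simp add: sc_mult sc_one)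
      thus ?thesis using x by simp
    qed
  qed
  thus ?thesis unfolding addv_image using card_FS finite_FS S(2)
    by (simp add: card_image card_cartesian_product)
qed

lemma sumset_addv: "sumset S (addv T x) = addv (sumset S T) x"
proof (rule equalityI; rule subsetI)
  fix z assume "z \<in> sumset S (addv T x)"
  then obtain s a t where st: "s \<in> S" "a \<in> FS" "t \<in> T" "z = s + (sc a x + t)"
    unfolding sumset_def addv_def by blast
  have "s + t \<in> sumset S T" using st unfolding sumset_def by blast
  moreover have "z = sc a x + (s + t)" using st by (simp add: algebra_simps)
  ultimately show "z \<in> addv (sumset S T) x" unfolding addv_def using st(2) by blast
next
  fix z assume "z \<in> addv (sumset S T) x"
  then obtain s a t where st: "s \<in> S" "a \<in> FS" "t \<in> T" "z = sc a x + (s + t)"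
    unfolding sumset_def addv_def by blast
  have "sc a x + t \<in> addv T x" using st unfolding addv_def by blast
  moreover have "z = s + (sc a x + t)" using st by (simp add: algebra_simps)
  ultimately show "z \<in> sumset S (addv T x)" unfolding sumset_def using st(1) by blast
qed

primrec spL :: "'v list \<Rightarrow> 'v set" where
  "spL [] = {0}"
| "spL (x # xs) = addv (spL xs) x"

primrec dimL :: "'v list \<Rightarrow> nat" where
  "dimL [] = 0"
| "dimL (x # xs) = (if x \<in> spL xs then dimL xs else Suc (dimL xs))"

lemma spL_subsp: "subsp (spL xs)"
proof (induction xs)
  case Nil show ?case by (simp add: subsp_def)
next
  case (Cons x xs) thus ?case by (simp add: addv_subsp)
qed

lemma finite_spL: "finite (spL xs)"
  by (induction xs) (auto simp: finite_addv)

lemma card_spL: "card (spL xs) = qq ^ dimL xs"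
  by (induction xs) (auto simp: addv_in spL_subsp card_addv finite_spL)

lemma dimL_le: "dimL xs \<le> length xs"
  by (induction xs) auto

lemma set_spL: "set xs \<subseteq> spL xs"
  by (induction xs) (use addv_sub addv_mem spL_subsp in auto)

lemma spL_least: "subsp T \<Longrightarrow> set xs \<subseteq> T \<Longrightarrow> spL xs \<subseteq> T"
proof (induction xs)
  case Nil thus ?case by (simp add: subspD(1))
next
  case (Cons x xs) thus ?case by (simp add: addv_least)
qed

lemma spL_append: "spL (xs @ ys) = sumset (spL xs) (spL ys)"
proof (induction xs)
  case Nil thus ?case by (simp add: sumset_def)
next
  case (Cons x xs)
  have "spL ((x # xs) @ ys) = addv (sumset (spL xs) (spL ys)) x" by (simp add: Cons)
  also have "\<dots> = sumset (addv (spL xs) x) (spL ys)"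
    using sumset_addv[of "spL ys" "spL xs" x] by (simp add: sumset_commute)
  finally show ?case by simp
qed

lemma dimL_append_le: "dimL (xs @ ys) \<le> length xs + dimL ys"
  by (induction xs) auto

lemma dimL_append_le2: "dimL (xs @ ys) \<le> dimL xs + dimL ys"
proof -
  have "qq ^ dimL (xs @ ys) = card (sumset (spL xs) (spL ys))"
    using card_spL[of "xs @ ys"] spL_append[of xs ys] by simp
  also have "sumset (spL xs) (spL ys) = (\<lambda>(a, b). a + b) ` (spL xs \<times> spL ys)"
    unfolding sumset_def by auto
  also have "card \<dots> \<le> card (spL xs \<times> spL ys)" by (intro card_image_le) (simp add: finite_spL)
  also have "\<dots> = qq ^ (dimL xs + dimL ys)" by (simp add: card_cartesian_product card_spL power_add)
  finally show ?thesis using qq_ge2 by (simp add: power_le_imp_le_exp)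
qed

lemma dimL_suffix: "dimL (xs @ ys) = length (xs @ ys) \<Longrightarrow> dimL ys = length ys"
  using dimL_append_le[of xs ys] dimL_le[of ys] by simp

lemma dimL_drop: "dimL xs = length xs \<Longrightarrow> dimL (drop i xs) = length (drop i xs)"
  using dimL_suffix[of "take i xs" "drop i xs"] by simp

lemma subsp_card_eq: "subsp S \<Longrightarrow> finite T \<Longrightarrow> S \<subseteq> T \<Longrightarrow> card S = card T \<Longrightarrow> S = T"
  using card_subset_eq by blast

lemma extend_basis:
  assumes S: "subsp S" "finite S" and hs: "set hs \<subseteq> S" "dimL hs = length hs"
  shows "\<exists>xs. set xs \<subseteq> S \<and> dimL (xs @ hs) = length (xs @ hs) \<and> spL (xs @ hs) = S"
  using hs
proof (induction "card S - card (spL hs)" arbitrary: hs rule: less_induct)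
  case less
  have sub: "spL hs \<subseteq> S" using spL_least[OF S(1) less.prems(1)] .
  show ?case
  proof (cases "spL hs = S")
    case True thus ?thesis using less.prems by (intro exI[of _ "[]"]) auto
  next
    case False
    then obtain x where x: "x \<in> S" "x \<notin> spL hs" using sub by auto
    have d: "dimL (x # hs) = length (x # hs)" using x less.prems by simp
    have c: "card (spL (x # hs)) = qq * card (spL hs)"
      using card_addv[OF spL_subsp finite_spL x(2)] by simp
    have pos: "card (spL hs) > 0" using card_spL qq_ge2 by simp
    have "card (spL (x # hs)) \<le> card S"
      using spL_least[OF S(1), of "x # hs"] x less.prems S(2) by (intro card_mono) auto
    moreover have "card (spL hs) < qq * card (spL hs)"
      using mult_strict_right_mono[of 1 qq "card (spL hs)"] pos qq_ge2 by simp
    ultimately have lt: "card S - card (spL (x # hs)) < card S - card (spL hs)"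
      using c by (intro diff_less_mono2) linarith+
    obtain xs where xs: "set xs \<subseteq> S" "dimL (xs @ x # hs) = length (xs @ x # hs)" "spL (xs @ x # hs) = S"
      using less.hyps[OF lt] x less.prems d by force
    thus ?thesis using set_spL[of "xs @ x # hs"] by (intro exI[of _ "xs @ [x]"]) auto
  qed
qed

lemma subsp_basis:
  assumes "subsp S" "finite S"
  shows "\<exists>hs. set hs \<subseteq> S \<and> dimL hs = length hs \<and> spL hs = S"
  using extend_basis[OF assms, of "[]"] by auto

lemma subsp_card_pow:
  assumes "subsp S" "finite S"
  shows "\<exists>k. card S = qq ^ k"
  using subsp_basis[OF assms] card_spL by metis

lemma count_indep:
  assumes S: "subsp S" "finite S" "card S = qq ^ s"
  shows "card {g. length g = w \<and> set g \<subseteq> S \<and> dimL g = w} = (\<Prod>i<w. qq ^ s - qq ^ i)"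
proof (induction w)
  case 0
  have "{g. length g = 0 \<and> set g \<subseteq> S \<and> dimL g = 0} = {[]}" by auto
  thus ?case by simp
next
  case (Suc w)
  let ?G = "\<lambda>w. {g. length g = w \<and> set g \<subseteq> S \<and> dimL g = w}"
  have eq: "?G (Suc w) = (\<lambda>(g, x). x # g) ` (SIGMA g:?G w. S - spL g)"
  proof (rule Set.set_eqI)
    fix h show "h \<in> ?G (Suc w) \<longleftrightarrow> h \<in> (\<lambda>(g, x). x # g) ` (SIGMA g:?G w. S - spL g)"
    proof
      assume h: "h \<in> ?G (Suc w)"
      then obtain x g where hg: "h = x # g" by (cases h) auto
      have "dimL g \<le> w" using h hg dimL_le[of g] by simp
      hence "x \<notin> spL g \<and> dimL g = w" using h hg by (auto split: if_splits)
      thus "h \<in> (\<lambda>(g, x). x # g) ` (SIGMA g:?G w. S - spL g)"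
        using h hg by (intro image_eqI[of _ _ "(g, x)"]) auto
    qed auto
  qed
  have inj: "inj_on (\<lambda>(g, x). x # g) (SIGMA g:?G w. S - spL g)" by (auto simp: inj_on_def)
  have fin: "finite (?G w)"
  proof -
    have "?G w \<subseteq> {g. set g \<subseteq> S \<and> length g = w}" by auto
    thus ?thesis using finite_lists_length_eq[OF S(2)] finite_subset by blast
  qed
  have cd: "card (S - spL g) = qq ^ s - qq ^ w" if "g \<in> ?G w" for g
  proof -
    have "spL g \<subseteq> S" using spL_least[OF S(1)] that by auto
    thus ?thesis using that S(3) card_spL[of g] by (simp add: card_Diff_subset finite_spL)
  qed
  have "card (?G (Suc w)) = card (SIGMA g:?G w. S - spL g)"
    unfolding eq using inj by (simp add: card_image)
  also have "\<dots> = (\<Sum>g\<in>?G w. card (S - spL g))" using fin S(2) by (simp add: card_SigmaI)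
  also have "\<dots> = (\<Sum>g\<in>?G w. qq ^ s - qq ^ w)" using cd by simp
  also have "\<dots> = card (?G w) * (qq ^ s - qq ^ w)" by simp
  finally show ?case using Suc by simp
qed

lemma spL_replicate0: "spL (replicate k 0) = {0}"
  by (induction k) (auto simp: addv_in spL_subsp[of "[]", simplified])

lemma spL_uminus: "spL (map uminus xs) = spL xs"
proof (induction xs)
  case (Cons x xs)
  have "addv S (- x) = addv S x" for S
  proof (rule equalityI; rule subsetI)
    fix z assume "z \<in> addv S (- x)"
    then obtain a y where ay: "a \<in> FS" "y \<in> S" "z = sc a (- x) + y" unfolding addv_def by blast
    have "z = sc (- a) x + y" using ay by (simp add: sc_minus_right sc_minus_left)
    thus "z \<in> addv S x" unfolding addv_def using ay FS_uminus by blast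
  next
    fix z assume "z \<in> addv S x"
    then obtain a y where ay: "a \<in> FS" "y \<in> S" "z = sc a x + y" unfolding addv_def by blast
    have "z = sc (- a) (- x) + y" using ay by (simp add: sc_minus_right sc_minus_left)
    thus "z \<in> addv S (- x)" unfolding addv_def using ay FS_uminus by blast
  qed
  thus ?case using Cons by simp
qed simp

lemma qq_pow_inj: "qq ^ a = qq ^ b \<Longrightarrow> a = b"
  using qq_ge2 by (simp add: power_inject_exp)

lemma qq_pow_le: "qq ^ a \<le> qq ^ b \<longleftrightarrow> a \<le> b"
  using qq_ge2 by (simp add: power_increasing_iff)

lemma dimL_uminus: "dimL (map uminus xs) = dimL xs"
  using card_spL[of xs] card_spL[of "map uminus xs"] spL_uminus[of xs] qq_pow_inj by metis

end

context ffield begin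

sublocale A: fspace "base_field q" q "(*) :: 'a \<Rightarrow> 'a \<Rightarrow> 'a"
  by unfold_locales
    (auto simp: FF_0 FF_1 FF_add FF_uminus FF_mult FF_inverse card_FF algebra_simps)

sublocale V: fspace "base_field q" q "\<lambda>a (f :: nat \<Rightarrow> 'a) j. a * f j"
  by unfold_locales
    (auto simp: FF_0 FF_1 FF_add FF_uminus FF_mult FF_inverse card_FF algebra_simps plus_fun_def)

lemma spL_snoc: "A.spL (xs @ [x]) = A.addv (A.spL xs) x"
proof -
  have "A.spL (xs @ [x]) = sumset (A.spL xs) (A.addv {0} x)" by (simp add: A.spL_append)
  also have "\<dots> = A.addv (sumset (A.spL xs) {0}) x" by (rule A.sumset_addv)
  also have "sumset (A.spL xs) {0} = A.spL xs" by (auto simp: sumset_def)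
  finally show ?thesis .
qed

lemma indep_le:
  assumes J: "J \<subseteq> {0..<length xs}" and ind: "indep_over FF (nth xs) J"
  shows "card J \<le> A.dimL xs"
proof -
  have finJ: "finite J" using J finite_subset by blast
  define PJ where "PJ = PiE J (\<lambda>_. FF)"
  define f where "f c = (\<Sum>j\<in>J. c j * xs ! j)" for c
  have img: "f ` PJ \<subseteq> A.spL xs"
  proof
    fix y assume "y \<in> f ` PJ"
    then obtain c where c: "c \<in> PJ" "y = f c" by auto
    have "c j * xs ! j \<in> A.spL xs" if "j \<in> J" for j
    proof -
      have "xs ! j \<in> A.spL xs" using J that A.set_spL nth_mem by fastforce
      thus ?thesis using A.subspD(3)[OF A.spL_subsp] c that unfolding PJ_def by auto
    qed
    hence "(\<Sum>j\<in>J. c j * xs ! j) \<in> A.spL xs" by (rule A.subsp_sum[OF A.spL_subsp])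
    thus "y \<in> A.spL xs" using c by (simp add: f_def)
  qed
  have inj: "inj_on f PJ"
  proof (rule inj_onI)
    fix c c' assume c: "c \<in> PJ" "c' \<in> PJ" "f c = f c'"
    have "(\<Sum>j\<in>J. (c j - c' j) * xs ! j) = 0"
      using c(3) by (simp add: f_def left_diff_distrib sum_subtractf)
    moreover have "\<forall>j\<in>J. c j - c' j \<in> FF" using c(1,2) FF_diff unfolding PJ_def by auto
    moreover have "(\<forall>j\<in>J. c j - c' j \<in> FF) \<longrightarrow> (\<Sum>j\<in>J. (c j - c' j) * xs ! j) = 0 \<longrightarrow> (\<forall>j\<in>J. c j - c' j = 0)"
      using spec[OF ind[unfolded indep_over_def], of "\<lambda>j. c j - c' j"] by simp
    ultimately have "\<forall>j\<in>J. c j - c' j = 0" by blast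
    thus "c = c'" using c(1,2) unfolding PJ_def by (intro PiE_ext) auto
  qed
  have "q ^ card J = card PJ" unfolding PJ_def using finJ by (simp add: card_PiE card_FF)
  also have "\<dots> = card (f ` PJ)" using inj by (simp add: card_image)
  also have "\<dots> \<le> card (A.spL xs)" using img A.finite_spL by (intro card_mono) auto
  also have "\<dots> = q ^ A.dimL xs" by (rule A.card_spL)
  finally show ?thesis using A.qq_pow_le by simp
qed

lemma indep_exists:
  "\<exists>J. J \<subseteq> {0..<length xs} \<and> indep_over FF (nth xs) J \<and> q ^ card J = card (A.spL xs)"
proof (induction xs rule: rev_induct)
  case Nil thus ?case by (intro exI[of _ "{}"]) (simp add: indep_over_def)
next
  case (snoc x xs)
  then obtain J where J: "J \<subseteq> {0..<length xs}" "indep_over FF (nth xs) J" "q ^ card J = card (A.spL xs)"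
    by blast
  have nth_eq: "(xs @ [x]) ! j = xs ! j" if "j \<in> J" for j using J(1) that by (auto simp: nth_append)
  have finJ: "finite J" using J finite_subset by blast
  show ?case
  proof (cases "x \<in> A.spL xs")
    case True
    have "indep_over FF (nth (xs @ [x])) J"
      using J(2) nth_eq unfolding indep_over_def by (simp cong: sum.cong)
    moreover have "A.spL (xs @ [x]) = A.spL xs" using True by (simp add: spL_snoc A.addv_in A.spL_subsp)
    ultimately show ?thesis using J by (intro exI[of _ J]) auto
  next
    case False
    define n where "n = length xs"
    have nJ: "n \<notin> J" using J(1) n_def by auto
    have "indep_over FF (nth (xs @ [x])) (insert n J)"
      unfolding indep_over_def
    proof (intro allI impI)
      fix c assume c: "\<forall>j\<in>insert n J. c j \<in> FF" and s: "(\<Sum>j\<in>insert n J. c j * (xs @ [x]) ! j) = 0"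
      have s2: "c n * x + (\<Sum>j\<in>J. c j * xs ! j) = 0"
        using s nJ finJ nth_eq by (simp add: n_def)
      have inS: "(\<Sum>j\<in>J. c j * xs ! j) \<in> A.spL xs"
      proof (rule A.subsp_sum[OF A.spL_subsp])
        fix j assume "j \<in> J"
        hence "xs ! j \<in> A.spL xs" using J(1) A.set_spL nth_mem by fastforce
        thus "c j * xs ! j \<in> A.spL xs" using A.subspD(3)[OF A.spL_subsp] c \<open>j \<in> J\<close> by auto
      qed
      have cn: "c n = 0"
      proof (rule ccontr)
        assume "c n \<noteq> 0"
        have "x = (- inverse (c n)) * (\<Sum>j\<in>J. c j * xs ! j)"
          using s2 \<open>c n \<noteq> 0\<close> by (simp add: field_simps add_eq_0_iff)
        also have "\<dots> \<in> A.spL xs"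
          by (rule A.subspD(3)[OF A.spL_subsp _ inS]) (use c FF_uminus FF_inverse in auto)
        finally show False using False by simp
      qed
      hence "(\<Sum>j\<in>J. c j * xs ! j) = 0" using s2 by simp
      hence "\<forall>j\<in>J. c j = 0" using J(2) c unfolding indep_over_def by auto
      thus "\<forall>j\<in>insert n J. c j = 0" using cn by auto
    qed
    moreover have "card (A.spL (xs @ [x])) = q * card (A.spL xs)"
      using A.card_addv[OF A.spL_subsp A.finite_spL False] by (simp add: spL_snoc)
    ultimately show ?thesis using J nJ finJ
      by (intro exI[of _ "insert n J"]) (auto simp: n_def)
  qed
qed

lemma rk_dimL: "rk FF xs = A.dimL xs"
proof -
  let ?S = "{card J | J. J \<subseteq> {0..<length xs} \<and> indep_over FF (nth xs) J}"
  have fin: "finite ?S"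
  proof -
    have "?S \<subseteq> card ` Pow {0..<length xs}" by auto
    thus ?thesis using finite_subset by blast
  qed
  obtain J where J: "J \<subseteq> {0..<length xs}" "indep_over FF (nth xs) J" "q ^ card J = card (A.spL xs)"
    using indep_exists by blast
  have cJ: "card J = A.dimL xs" using J(3) A.card_spL A.qq_pow_inj by metis
  have mem: "A.dimL xs \<in> ?S" unfolding mem_Collect_eq using J cJ by (intro exI[of _ J]) simp
  have "Max ?S = A.dimL xs"
    by (rule Max_eqI[OF fin]) (use indep_le mem in auto)
  thus ?thesis unfolding rk_def by simp
qed

lemma card_spL_rk: "card (A.spL xs) = q ^ rk FF xs"
  by (simp add: rk_dimL A.card_spL)

lemma rk_le_length: "rk FF xs \<le> length xs"
  by (simp add: rk_dimL A.dimL_le)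

end

context ffield begin

definition Fn :: "nat \<Rightarrow> (nat \<Rightarrow> 'a) set" where
  "Fn n = {f. (\<forall>j. f j \<in> FF) \<and> (\<forall>j\<ge>n. f j = 0)}"

definition phi :: "'a list \<Rightarrow> (nat \<Rightarrow> 'a) \<Rightarrow> 'a" where
  "phi y f = (\<Sum>j<length y. f j * y ! j)"

definition Rel :: "'a list \<Rightarrow> (nat \<Rightarrow> 'a) set" where
  "Rel y = {f \<in> Fn (length y). phi y f = 0}"

definition Ln :: "nat \<Rightarrow> 'a list set" where
  "Ln n = {x. length x = n}"

lemma finite_Ln: "finite (Ln n)"
  using finite_lists_length_eq[of "UNIV :: 'a set" n] by (simp add: Ln_def)

lemma card_Ln: "card (Ln n) = (q ^ m) ^ n"
  using card_lists_length_eq[of "UNIV :: 'a set" n] cardA by (simp add: Ln_def)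

lemma Fn_subsp: "V.subsp (Fn n)"
  unfolding V.subsp_def Fn_def by (auto simp: FF_0 FF_add FF_mult plus_fun_def)

lemma Fn_zero: "(0 :: nat \<Rightarrow> 'a) \<in> Fn n"
  using V.subspD(1)[OF Fn_subsp] .

lemma card_Fn: "card (Fn n) = q ^ n" and finite_Fn: "finite (Fn n)"
proof -
  define LS where "LS = {xs. set xs \<subseteq> FF \<and> length xs = n}"
  define g where "g f = map f [0..<n]" for f :: "nat \<Rightarrow> 'a"
  have inj: "inj_on g (Fn n)"
  proof (rule inj_onI)
    fix f f' assume f: "f \<in> Fn n" "f' \<in> Fn n" "g f = g f'"
    show "f = f'"
    proof
      fix j show "f j = f' j"
      proof (cases "j < n")
        case True
        have "\<forall>x\<in>{0..<n}. f x = f' x" using f(3) unfolding g_def by simp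
        thus ?thesis using True by simp
      next
        case False thus ?thesis using f(1,2) unfolding Fn_def by auto
      qed
    qed
  qed
  have img: "g ` Fn n = LS"
  proof (rule equalityI; rule subsetI)
    fix xs assume "xs \<in> g ` Fn n" thus "xs \<in> LS" unfolding LS_def g_def Fn_def by auto
  next
    fix xs assume xs: "xs \<in> LS"
    define f where "f j = (if j < n then xs ! j else 0)" for j
    have "f \<in> Fn n" using xs FF_0 nth_mem unfolding f_def Fn_def LS_def by fastforce
    moreover have "g f = xs" using xs unfolding g_def f_def LS_def by (intro nth_equalityI) auto
    ultimately show "xs \<in> g ` Fn n" by blast
  qed
  have finLS: "finite LS" unfolding LS_def using finite_lists_length_eq[OF A.finite_FS] by simp
  show "finite (Fn n)" using finite_imageD[of g "Fn n"] inj img finLS by simp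
  have "card (Fn n) = card LS" using card_image[OF inj] img by simp
  also have "\<dots> = q ^ n" unfolding LS_def using card_lists_length_eq[OF A.finite_FS, of n] card_FF by simp
  finally show "card (Fn n) = q ^ n" .
qed

lemma phi_add: "phi y (f + g) = phi y f + phi y g"
  by (simp add: phi_def sum.distrib distrib_right)

lemma phi_sc: "phi y (\<lambda>j. a * f j) = a * phi y f"
  by (simp add: phi_def sum_distrib_left mult.assoc)

lemma phi_zero: "phi y 0 = 0"
  by (simp add: phi_def)

lemma phi_diff: "phi y (f - g) = phi y f - phi y g"
  by (simp add: phi_def sum_subtractf left_diff_distrib)

lemma phi_Cons: "phi (x # y) f = f 0 * x + phi y (\<lambda>j. f (Suc j))"
  unfolding phi_def by (simp only: length_Cons sum.lessThan_Suc_shift) simp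

lemma phi_image: "phi y ` Fn (length y) = A.spL y"
proof (induction y)
  case Nil
  have "Fn 0 = {0}" unfolding Fn_def using FF_0 by auto
  thus ?case by (simp add: phi_def)
next
  case (Cons x y)
  show ?case
  proof (rule equalityI; rule subsetI)
    fix b assume "b \<in> phi (x # y) ` Fn (length (x # y))"
    then obtain f where f: "f \<in> Fn (Suc (length y))" "b = phi (x # y) f" by auto
    have "(\<lambda>j. f (Suc j)) \<in> Fn (length y)" using f(1) unfolding Fn_def by auto
    hence "phi y (\<lambda>j. f (Suc j)) \<in> A.spL y" using Cons.IH by blast
    moreover have "f 0 \<in> FF" using f(1) unfolding Fn_def by auto
    ultimately show "b \<in> A.spL (x # y)" using f(2) unfolding phi_Cons by (auto simp: A.addv_def)
  next
    fix b assume "b \<in> A.spL (x # y)"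
    then obtain a z where az: "a \<in> FF" "z \<in> A.spL y" "b = a * x + z" by (auto simp: A.addv_def)
    then obtain g where g: "g \<in> Fn (length y)" "z = phi y g" using Cons.IH by blast
    define f where "f j = (if j = 0 then a else g (j - 1))" for j
    have "f \<in> Fn (length (x # y))" using g(1) az(1) unfolding Fn_def f_def by auto
    moreover have "phi (x # y) f = b" using az g unfolding phi_Cons f_def by simp
    ultimately show "b \<in> phi (x # y) ` Fn (length (x # y))" by blast
  qed
qed

lemma phi_mem: "f \<in> Fn (length y) \<Longrightarrow> phi y f \<in> A.spL y"
  using phi_image by blast

lemma Rel_subsp: "V.subsp (Rel y)"
  unfolding V.subsp_def Rel_def
  using V.subspD[OF Fn_subsp] by (auto simp: phi_add phi_sc phi_zero)

lemma Rel_sub: "Rel y \<subseteq> Fn (length y)"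
  unfolding Rel_def by auto

lemma finite_Rel: "finite (Rel y)"
  using finite_subset[OF Rel_sub finite_Fn] .

lemma card_Rel_mult: "card (Rel y) * card (A.spL y) = q ^ length y"
proof -
  let ?n = "length y"
  have fib: "card {f \<in> Fn ?n. phi y f = b} = card (Rel y)" if bim: "b \<in> phi y ` Fn ?n" for b
  proof -
    obtain f0 where f0: "f0 \<in> Fn ?n" "b = phi y f0" using bim by auto
    have "{f \<in> Fn ?n. phi y f = b} = (\<lambda>g. g + f0) ` Rel y"
    proof (rule equalityI; rule subsetI)
      fix f assume f: "f \<in> {f \<in> Fn ?n. phi y f = b}"
      have "f - f0 \<in> Rel y" using f f0 V.subsp_diff[OF Fn_subsp] unfolding Rel_def
        by (auto simp: phi_diff)
      thus "f \<in> (\<lambda>g. g + f0) ` Rel y" by (intro image_eqI[of _ _ "f - f0"]) auto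
    next
      fix f assume "f \<in> (\<lambda>g. g + f0) ` Rel y"
      then obtain g where g: "g \<in> Rel y" "f = g + f0" by auto
      thus "f \<in> {f \<in> Fn ?n. phi y f = b}"
        using f0 V.subspD(2)[OF Fn_subsp] unfolding Rel_def by (auto simp: phi_add)
    qed
    thus ?thesis by (simp add: card_image inj_on_def)
  qed
  have "q ^ ?n = card (Fn ?n)" by (simp add: card_Fn)
  also have "\<dots> = (\<Sum>b\<in>phi y ` Fn ?n. card {f \<in> Fn ?n. phi y f = b})"
    by (rule card_fibers[OF finite_Fn])
  also have "\<dots> = card (phi y ` Fn ?n) * card (Rel y)" using fib by simp
  finally show ?thesis by (simp add: phi_image mult.commute)
qed

lemma card_Rel: "card (Rel y) = q ^ (length y - rk FF y)"
proof -
  have "card (Rel y) * q ^ rk FF y = q ^ (length y - rk FF y) * q ^ rk FF y"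
    using card_Rel_mult[of y] rk_le_length[of y] by (simp add: card_spL_rk flip: power_add)
  thus ?thesis using q_ge2 by simp
qed

definition psi :: "(nat \<Rightarrow> 'a) list \<Rightarrow> 'a list \<Rightarrow> 'a list" where
  "psi hs ev = map (phi ev) hs"

lemma psi_append: "psi (hs2 @ hs1) ev = psi hs2 ev @ psi hs1 ev"
  by (simp add: psi_def)

lemma length_psi [simp]: "length (psi hs ev) = length hs"
  by (simp add: psi_def)

lemma phi_spL_image: "phi ev ` V.spL hs = A.spL (map (phi ev) hs)"
proof (induction hs)
  case Nil thus ?case by (simp add: phi_def)
next
  case (Cons h hs)
  show ?case
  proof (rule equalityI; rule subsetI)
    fix b assume "b \<in> phi ev ` V.spL (h # hs)"
    then obtain a g where ag: "a \<in> FF" "g \<in> V.spL hs" "b = phi ev ((\<lambda>j. a * h j) + g)"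
      by (auto simp: V.addv_def)
    have "b = a * phi ev h + phi ev g" using ag(3) by (simp add: phi_add phi_sc)
    thus "b \<in> A.spL (map (phi ev) (h # hs))" using ag Cons.IH by (auto simp: A.addv_def)
  next
    fix b assume "b \<in> A.spL (map (phi ev) (h # hs))"
    then obtain a z where az: "a \<in> FF" "z \<in> A.spL (map (phi ev) hs)" "b = a * phi ev h + z"
      by (auto simp: A.addv_def)
    then obtain g where g: "g \<in> V.spL hs" "z = phi ev g" using Cons.IH by blast
    have "b = phi ev ((\<lambda>j. a * h j) + g)" using az g by (simp add: phi_add phi_sc)
    moreover have "(\<lambda>j. a * h j) + g \<in> V.spL (h # hs)" using az(1) g(1) by (auto simp: V.addv_def)
    ultimately show "b \<in> phi ev ` V.spL (h # hs)" by blast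
  qed
qed

definition is_basis :: "nat \<Rightarrow> (nat \<Rightarrow> 'a) list \<Rightarrow> bool" where
  "is_basis n hs \<longleftrightarrow> set hs \<subseteq> Fn n \<and> V.dimL hs = length hs \<and> V.spL hs = Fn n"

lemma is_basis_length: assumes "is_basis n hs" shows "length hs = n"
proof -
  have "q ^ length hs = q ^ n"
    using V.card_spL[of hs] card_Fn[of n] assms unfolding is_basis_def by simp
  thus ?thesis by (rule V.qq_pow_inj)
qed

lemma psi_span: assumes B: "is_basis n hs" and l: "length ev = n" shows "A.spL (psi hs ev) = A.spL ev"
proof -
  have "A.spL (psi hs ev) = phi ev ` V.spL hs" unfolding psi_def by (rule phi_spL_image[symmetric])
  also have "V.spL hs = Fn n" using B unfolding is_basis_def by simp
  also have "phi ev ` Fn n = A.spL ev" using phi_image[of ev] l by simp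
  finally show ?thesis .
qed

lemma rk_psi: assumes "is_basis n hs" "length ev = n" shows "rk FF (psi hs ev) = rk FF ev"
proof -
  have "q ^ rk FF (psi hs ev) = q ^ rk FF ev"
    unfolding card_spL_rk[symmetric] using psi_span[OF assms] by simp
  thus ?thesis by (rule A.qq_pow_inj)
qed

lemma dimL_psi: "is_basis n hs \<Longrightarrow> length ev = n \<Longrightarrow> A.dimL (psi hs ev) = A.dimL ev"
  using rk_psi[of n hs ev] by (simp add: rk_dimL)

lemma phi_vdiff: "length ev = length ev' \<Longrightarrow> phi (vdiff ev ev') f = phi ev f - phi ev' f"
  by (simp add: phi_def vdiff_def sum_subtractf right_diff_distrib)

lemma length_vdiff [simp]: "length (vdiff ev ev') = min (length ev) (length ev')"
  by (simp add: vdiff_def)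

lemma nth_vdiff: "j < length ev \<Longrightarrow> j < length ev' \<Longrightarrow> vdiff ev ev' ! j = ev ! j - ev' ! j"
  by (simp add: vdiff_def)

lemma spL_zero_imp: assumes "A.spL ev = {0}" "j < length ev" shows "ev ! j = 0"
proof -
  have "ev ! j \<in> set ev" using assms(2) by (rule nth_mem)
  hence "ev ! j \<in> A.spL ev" using A.set_spL by blast
  thus ?thesis using assms(1) by simp
qed

lemma psi_inj:
  assumes "is_basis n hs" "length ev = n" "length ev' = n" "psi hs ev = psi hs ev'"
  shows "ev = ev'"
proof -
  have "\<forall>h\<in>set hs. phi ev h = phi ev' h" using assms(4) unfolding psi_def by (simp add: map_eq_conv)
  hence "\<forall>h\<in>set hs. phi (vdiff ev ev') h = 0" using assms(2,3) by (simp add: phi_vdiff)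
  hence "psi hs (vdiff ev ev') = replicate (length hs) 0"
    unfolding psi_def by (intro nth_equalityI) auto
  hence "A.spL (vdiff ev ev') = {0}"
    using psi_span[OF assms(1), of "vdiff ev ev'"] assms(2,3) A.spL_replicate0 by simp
  hence "vdiff ev ev' ! j = 0" if "j < n" for j using spL_zero_imp that assms(2,3) by simp
  thus ?thesis using assms(2,3) by (intro nth_equalityI) (auto simp: nth_vdiff)
qed

lemma psi_surj:
  assumes "is_basis n hs"
  shows "psi hs ` Ln n = Ln n"
proof -
  have inj: "inj_on (psi hs) (Ln n)" using psi_inj[OF assms] by (auto simp: inj_on_def Ln_def)
  have sub: "psi hs ` Ln n \<subseteq> Ln n" using is_basis_length[OF assms] by (auto simp: Ln_def)
  show ?thesis using card_image[OF inj] by (intro card_subset_eq[OF finite_Ln sub]) simp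
qed

lemma psi_surj': assumes "is_basis n hs" "length z = n" shows "\<exists>ev. length ev = n \<and> psi hs ev = z"
proof -
  have "z \<in> psi hs ` Ln n" using psi_surj[OF assms(1)] assms(2) by (simp add: Ln_def)
  thus ?thesis by (auto simp: Ln_def)
qed

lemma Rel_ge_iff:
  assumes "set hs1 \<subseteq> Fn (length ev)"
  shows "V.spL hs1 \<subseteq> Rel ev \<longleftrightarrow> psi hs1 ev = replicate (length hs1) 0"
proof
  assume "V.spL hs1 \<subseteq> Rel ev"
  hence "\<forall>h\<in>set hs1. phi ev h = 0" using V.set_spL[of hs1] unfolding Rel_def by auto
  thus "psi hs1 ev = replicate (length hs1) 0" unfolding psi_def by (intro nth_equalityI) auto
next
  assume "psi hs1 ev = replicate (length hs1) 0"
  hence "\<forall>h\<in>set hs1. phi ev h = 0" unfolding psi_def by (simp add: map_eq_conv map_replicate_const[symmetric])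
  hence "set hs1 \<subseteq> Rel ev" using assms unfolding Rel_def by auto
  thus "V.spL hs1 \<subseteq> Rel ev" using V.spL_least[OF Rel_subsp] by blast
qed

lemma adapted_basis:
  assumes L: "V.subsp L" "L \<subseteq> Fn n"
  shows "\<exists>hs2 hs1. is_basis n (hs2 @ hs1) \<and> V.spL hs1 = L \<and> set hs1 \<subseteq> L \<and> V.dimL hs1 = length hs1"
proof -
  have finL: "finite L" using finite_subset[OF L(2) finite_Fn] .
  obtain hs1 where h1: "set hs1 \<subseteq> L" "V.dimL hs1 = length hs1" "V.spL hs1 = L"
    using V.subsp_basis[OF L(1) finL] by blast
  obtain hs2 where h2: "set hs2 \<subseteq> Fn n" "V.dimL (hs2 @ hs1) = length (hs2 @ hs1)" "V.spL (hs2 @ hs1) = Fn n"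
    using V.extend_basis[OF Fn_subsp finite_Fn, of hs1] h1 L(2) by blast
  have "is_basis n (hs2 @ hs1)" unfolding is_basis_def using h1 h2 L(2) by auto
  thus ?thesis using h1 by blast
qed

end

context fspace begin

lemma spL_append_zeros: "spL (xs @ replicate k 0) = spL xs"
  by (simp add: spL_append spL_replicate0 sumset_def)

lemma dimL_append_zeros: "dimL (xs @ replicate k 0) = dimL xs"
  using card_spL[of xs] card_spL[of "xs @ replicate k 0"] spL_append_zeros[of xs k] qq_pow_inj by metis

end

fun fPhi :: "nat \<Rightarrow> nat \<Rightarrow> nat \<Rightarrow> nat \<Rightarrow> nat \<Rightarrow> nat" where
  "fPhi q m t 0 s = (if s \<le> t then 1 else 0)"
| "fPhi q m t (Suc u) s = q ^ s * fPhi q m t u s + (q ^ m - q ^ s) * fPhi q m t u (Suc s)"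

lemma fPhi_zero: "s > t \<Longrightarrow> fPhi q m t u s = 0"
  by (induction u arbitrary: s) auto

lemma card_split:
  fixes P :: "'b list \<Rightarrow> bool"
  assumes fin: "\<And>k. finite {x :: 'b list. length x = k}"
  shows "card {ev. length ev = u + d \<and> P ev} = (\<Sum>z\<in>{z. length z = d}. card {g. length g = u \<and> P (g @ z)})"
proof -
  let ?S = "SIGMA z:{z. length z = d}. {g. length g = u \<and> P (g @ z)}"
  have fin2: "finite {g. length g = u \<and> P (g @ z)}" for z
    using fin[of u] by (rule finite_subset[rotated]) auto
  have "(\<Sum>z\<in>{z. length z = d}. card {g. length g = u \<and> P (g @ z)}) = card ?S"
    using fin[of d] fin2 by (simp add: card_SigmaI)
  also have "card ?S = card ((\<lambda>(z, g). g @ z) ` ?S)"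
    by (rule card_image[symmetric]) (auto simp: inj_on_def)
  also have "(\<lambda>(z, g). g @ z) ` ?S = {ev. length ev = u + d \<and> P ev}"
  proof (rule equalityI; rule subsetI)
    fix ev assume "ev \<in> {ev. length ev = u + d \<and> P ev}"
    hence "ev = take u ev @ drop u ev" "length (drop u ev) = d" "length (take u ev) = u" "P ev" by auto
    thus "ev \<in> (\<lambda>(z, g). g @ z) ` ?S"
      by (intro image_eqI[of _ _ "(drop u ev, take u ev)"]) auto
  qed auto
  finally show ?thesis by simp
qed

context ffield begin

lemma A_subsp_UNIV: "A.subsp UNIV" by (rule A.subsp_UNIV)

lemma count_indep_A: "card {g. length g = w \<and> A.dimL g = w} = (\<Prod>i<w. q ^ m - q ^ i)"
  using A.count_indep[OF A.subsp_UNIV finite cardA, of w] by simp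

lemma REL_count:
  assumes L: "V.subsp L" "L \<subseteq> Fn d" "card L = q ^ (d - w)" and w: "w \<le> d"
  shows "card {z \<in> Ln d. Rel z = L} = (\<Prod>i<w. q ^ m - q ^ i)"
proof -
  obtain hs2 hs1 where B: "is_basis d (hs2 @ hs1)" "V.spL hs1 = L" "set hs1 \<subseteq> L" "V.dimL hs1 = length hs1"
    using adapted_basis[OF L(1,2)] by blast
  have l1: "length hs1 = d - w"
    using V.card_spL[of hs1] B(2,4) L(3) V.qq_pow_inj by metis
  have l2: "length hs2 = w" using is_basis_length[OF B(1)] l1 w by simp
  have hs1F: "set hs1 \<subseteq> Fn d" using B(3) L(2) by blast
  have char: "Rel z = L \<longleftrightarrow> psi hs1 z = replicate (d - w) 0 \<and> A.dimL (psi hs2 z) = w"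
    if z: "length z = d" for z
  proof
    assume R: "Rel z = L"
    have p1: "psi hs1 z = replicate (d - w) 0" using Rel_ge_iff[of hs1 z] hs1F z R B(2) l1 by simp
    have "q ^ (d - rk FF z) = q ^ (d - w)" using card_Rel[of z] R L(3) z by simp
    hence "d - rk FF z = d - w" by (rule A.qq_pow_inj)
    hence "rk FF z = w" using rk_le_length[of z] z w by simp
    hence "A.dimL (psi (hs2 @ hs1) z) = w" using dimL_psi[OF B(1) z] rk_dimL by simp
    thus "psi hs1 z = replicate (d - w) 0 \<and> A.dimL (psi hs2 z) = w"
      using p1 by (simp add: psi_append A.dimL_append_zeros)
  next
    assume H: "psi hs1 z = replicate (d - w) 0 \<and> A.dimL (psi hs2 z) = w"
    have sub: "L \<subseteq> Rel z" using Rel_ge_iff[of hs1 z] hs1F z H B(2) l1 by simp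
    have "A.dimL (psi (hs2 @ hs1) z) = w" using H by (simp add: psi_append A.dimL_append_zeros)
    hence "rk FF z = w" using dimL_psi[OF B(1) z] rk_dimL by simp
    hence "card (Rel z) = card L" using card_Rel[of z] L(3) z by simp
    thus "Rel z = L" using card_subset_eq[OF finite_Rel sub] by simp
  qed
  have bij: "bij_betw (psi hs2) {z \<in> Ln d. Rel z = L} {g. length g = w \<and> A.dimL g = w}"
  proof (rule bij_betwI')
    fix z z' assume "z \<in> {z \<in> Ln d. Rel z = L}" "z' \<in> {z \<in> Ln d. Rel z = L}"
    hence zz: "length z = d" "length z' = d" "Rel z = L" "Rel z' = L" by (auto simp: Ln_def)
    show "(psi hs2 z = psi hs2 z') = (z = z')"
    proof
      assume "psi hs2 z = psi hs2 z'"
      hence "psi (hs2 @ hs1) z = psi (hs2 @ hs1) z'" using char[OF zz(1)] char[OF zz(2)] zz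
        by (simp add: psi_append)
      thus "z = z'" using psi_inj[OF B(1) zz(1,2)] by simp
    qed simp
  next
    fix z assume "z \<in> {z \<in> Ln d. Rel z = L}"
    thus "psi hs2 z \<in> {g. length g = w \<and> A.dimL g = w}" using char l2 by (auto simp: Ln_def)
  next
    fix g assume g: "g \<in> {g. length g = w \<and> A.dimL g = w}"
    obtain z where z: "length z = d" "psi (hs2 @ hs1) z = g @ replicate (d - w) 0"
      using psi_surj'[OF B(1), of "g @ replicate (d - w) 0"] g w by auto
    have "psi hs2 z = g" "psi hs1 z = replicate (d - w) 0"
      using z(2) g l2 by (simp_all add: psi_append)
    hence "z \<in> {z \<in> Ln d. Rel z = L}" using char[OF z(1)] g z(1) by (simp add: Ln_def)
    thus "\<exists>z\<in>{z \<in> Ln d. Rel z = L}. g = psi hs2 z" using \<open>psi hs2 z = g\<close> by blast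
  qed
  show ?thesis using bij_betw_same_card[OF bij] count_indep_A by simp
qed

definition Sub :: "nat \<Rightarrow> nat \<Rightarrow> (nat \<Rightarrow> 'a) set set" where
  "Sub n j = {L. V.subsp L \<and> L \<subseteq> Fn n \<and> card L = q ^ j}"

lemma SUB_count: "card (Sub n j) * (\<Prod>i<j. q ^ j - q ^ i) = (\<Prod>i<j. q ^ n - q ^ i)"
proof -
  define G where "G = {g. length g = j \<and> set g \<subseteq> Fn n \<and> V.dimL g = j}"
  define GL where "GL L = {g. length g = j \<and> set g \<subseteq> L \<and> V.dimL g = j}" for L
  have cG: "card G = (\<Prod>i<j. q ^ n - q ^ i)"
    unfolding G_def by (rule V.count_indep[OF Fn_subsp finite_Fn card_Fn])
  have finG: "finite G"
  proof -
    have "G \<subseteq> {g. set g \<subseteq> Fn n \<and> length g = j}" unfolding G_def by auto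
    thus ?thesis using finite_lists_length_eq[OF finite_Fn] finite_subset by blast
  qed
  have img: "V.spL ` G = Sub n j"
  proof (rule equalityI; rule subsetI)
    fix L assume "L \<in> V.spL ` G"
    then obtain g where g: "g \<in> G" "L = V.spL g" by auto
    show "L \<in> Sub n j" unfolding Sub_def using g V.spL_subsp V.spL_least[OF Fn_subsp] V.card_spL
      by (auto simp: G_def)
  next
    fix L assume L: "L \<in> Sub n j"
    have finL: "finite L" using L finite_subset[OF _ finite_Fn] unfolding Sub_def by blast
    obtain hs where hs: "set hs \<subseteq> L" "V.dimL hs = length hs" "V.spL hs = L"
      using V.subsp_basis[of L] L finL unfolding Sub_def by blast
    have "length hs = j" using V.card_spL[of hs] hs L V.qq_pow_inj unfolding Sub_def by fastforce
    hence "hs \<in> G" using hs L unfolding G_def Sub_def by auto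
    thus "L \<in> V.spL ` G" using hs by blast
  qed
  have fib: "{g \<in> G. V.spL g = L} = GL L" if L: "L \<in> Sub n j" for L
  proof (rule equalityI; rule subsetI)
    fix g assume "g \<in> {g \<in> G. V.spL g = L}"
    thus "g \<in> GL L" using V.set_spL[of g] unfolding G_def GL_def by auto
  next
    fix g assume g: "g \<in> GL L"
    have sub: "V.spL g \<subseteq> L" using V.spL_least[of L g] g L unfolding GL_def Sub_def by auto
    have "card (V.spL g) = card L" using V.card_spL[of g] g L unfolding GL_def Sub_def by simp
    hence "V.spL g = L" using card_subset_eq[OF _ sub] L finite_subset[OF _ finite_Fn] unfolding Sub_def by blast
    thus "g \<in> {g \<in> G. V.spL g = L}" using g L unfolding GL_def G_def Sub_def by auto
  qed
  have cGL: "card (GL L) = (\<Prod>i<j. q ^ j - q ^ i)" if L: "L \<in> Sub n j" for L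
    unfolding GL_def using L finite_subset[OF _ finite_Fn, of L] unfolding Sub_def
    by (intro V.count_indep) auto
  have "card G = (\<Sum>L\<in>V.spL ` G. card {g \<in> G. V.spL g = L})" by (rule card_fibers[OF finG])
  also have "\<dots> = (\<Sum>L\<in>Sub n j. (\<Prod>i<j. q ^ j - q ^ i))" unfolding img using fib cGL by simp
  finally show ?thesis using cG by simp
qed

lemma Phi_count:
  assumes "A.subsp S" "card S = q ^ s"
  shows "card {g \<in> Ln u. card (sumset S (A.spL g)) \<le> q ^ t} = fPhi q m t u s"
  using assms
proof (induction u arbitrary: S s)
  case 0
  have "sumset S {0} = S" by (auto simp: sumset_def)
  hence c: "card (sumset S (A.spL [])) \<le> q ^ t \<longleftrightarrow> s \<le> t" using 0 A.qq_pow_le by simp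
  have "{g \<in> Ln 0. card (sumset S (A.spL g)) \<le> q ^ t} = (if s \<le> t then {[]} else {})"
    using c by (auto simp: Ln_def)
  thus ?case by simp
next
  case (Suc u)
  let ?P = "\<lambda>g. card (sumset S (A.spL g)) \<le> q ^ t"
  have key: "sumset S (A.spL (x # g)) = sumset (A.addv S x) (A.spL g)" for x g
    by (simp add: A.sumset_addv sumset_commute)
  have cnt: "card {g \<in> Ln u. ?P (x # g)} = (if x \<in> S then fPhi q m t u s else fPhi q m t u (Suc s))" for x
  proof -
    have e1: "{g \<in> Ln u. ?P (x # g)} = {g \<in> Ln u. card (sumset (A.addv S x) (A.spL g)) \<le> q ^ t}"
      by (simp only: key)
    show ?thesis
    proof (cases "x \<in> S")
      case True
      hence "A.addv S x = S" using A.addv_in Suc.prems(1) by blast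
      thus ?thesis unfolding e1 using Suc.IH[OF Suc.prems] True by simp
    next
      case False
      have c: "card (A.addv S x) = q ^ Suc s"
        using A.card_addv[OF Suc.prems(1) _ False] Suc.prems(2) finite by simp
      show ?thesis unfolding e1 using Suc.IH[OF A.addv_subsp[OF Suc.prems(1)] c] False by simp
    qed
  qed
  have "{g \<in> Ln (Suc u). ?P g} = (\<lambda>(x, g). x # g) ` (SIGMA x:UNIV. {g \<in> Ln u. ?P (x # g)})"
  proof (rule equalityI; rule subsetI)
    fix g assume "g \<in> {g \<in> Ln (Suc u). ?P g}"
    then obtain x g' where "g = x # g'" "length g' = u" "?P (x # g')" by (cases g) (auto simp: Ln_def)
    thus "g \<in> (\<lambda>(x, g). x # g) ` (SIGMA x:UNIV. {g \<in> Ln u. ?P (x # g)})"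
      by (intro image_eqI[of _ _ "(x, g')"]) (auto simp: Ln_def)
  qed (auto simp: Ln_def)
  hence "card {g \<in> Ln (Suc u). ?P g} = card (SIGMA x:UNIV. {g \<in> Ln u. ?P (x # g)})"
    by (simp add: card_image inj_on_def)
  also have "\<dots> = (\<Sum>x\<in>UNIV. card {g \<in> Ln u. ?P (x # g)})"
    using finite_Ln by (simp add: card_SigmaI)
  also have "\<dots> = (\<Sum>x\<in>UNIV. if x \<in> S then fPhi q m t u s else fPhi q m t u (Suc s))"
    using cnt by simp
  also have "\<dots> = card S * fPhi q m t u s + card (UNIV - S) * fPhi q m t u (Suc s)"
    by (simp add: sum.If_cases Int_def Diff_eq)
  also have "card (UNIV - S) = q ^ m - q ^ s" using Suc.prems(2) cardA by (simp add: card_Diff_subset)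
  finally show ?case using Suc.prems(2) by simp
qed

definition Phi :: "nat \<Rightarrow> nat \<Rightarrow> 'a list \<Rightarrow> nat" where
  "Phi u t z = card {g \<in> Ln u. A.dimL (g @ z) \<le> t}"

lemma Phi_eq: "Phi u t z = fPhi q m t u (A.dimL z)"
proof -
  have "{g \<in> Ln u. A.dimL (g @ z) \<le> t} = {g \<in> Ln u. card (sumset (A.spL z) (A.spL g)) \<le> q ^ t}"
  proof -
    have "card (sumset (A.spL z) (A.spL g)) = q ^ A.dimL (g @ z)" for g
      using A.card_spL[of "g @ z"] by (simp add: A.spL_append sumset_commute)
    thus ?thesis using A.qq_pow_le by simp
  qed
  thus ?thesis unfolding Phi_def using Phi_count[OF A.spL_subsp A.card_spL] by simp
qed

lemma Phi_pos_le: "Phi u t z > 0 \<Longrightarrow> A.dimL z \<le> t"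
  using fPhi_zero[of t "A.dimL z" q m u] Phi_eq[of u t z] by (cases "A.dimL z \<le> t") auto

lemma sum_Phi: "(\<Sum>z\<in>Ln d. Phi u t z) = card {ev \<in> Ln (u + d). A.dimL ev \<le> t}"
  unfolding Phi_def Ln_def using card_split[of u d "\<lambda>ev. A.dimL ev \<le> t"] finite_Ln[unfolded Ln_def]
  by simp

end

context ffield begin

lemma q_pos: "q > 0" using q_ge2 by simp

lemma A_fun_nonneg: "t \<le> m' \<Longrightarrow> A_fun q m' t \<ge> 0"
  unfolding A_fun_def using q_ge2
  by (intro prod_nonneg) (auto intro!: power_increasing)

lemma A_fun_pos: "t \<le> m' \<Longrightarrow> A_fun q m' t > 0"
  unfolding A_fun_def using q_ge2
  by (intro prod_pos) (auto intro!: power_strict_increasing)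

lemma A_fun_nat: "t \<le> m' \<Longrightarrow> A_fun q m' t = real (\<Prod>i<t. q ^ m' - q ^ i)"
  unfolding A_fun_def using q_ge2
  by (simp add: of_nat_diff power_increasing)

lemma A_fun_Suc: "A_fun q m' (Suc t) = A_fun q m' t * (real q ^ m' - real q ^ t)"
  by (simp add: A_fun_def)

lemma Ar_bound:
  assumes "w \<le> t" "t \<le> m"
  shows "A_fun q m t \<le> A_fun q m w * (real q ^ m) ^ (t - w)"
  using assms
proof (induction t rule: dec_induct)
  case base thus ?case by simp
next
  case (step t)
  have "A_fun q m (Suc t) = A_fun q m t * (real q ^ m - real q ^ t)" by (rule A_fun_Suc)
  also have "\<dots> \<le> A_fun q m t * real q ^ m"
    using A_fun_nonneg[of t m] step by (intro mult_left_mono) auto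
  also have "\<dots> \<le> A_fun q m w * (real q ^ m) ^ (t - w) * real q ^ m"
    using step by (intro mult_right_mono) auto
  also have "\<dots> = A_fun q m w * (real q ^ m) ^ (Suc t - w)"
    using step by (simp add: Suc_diff_le)
  finally show ?case .
qed

lemma key_real:
  assumes "D + 1 \<le> w" "w \<le> t" "t \<le> m"
  shows "(real q ^ m) ^ (w - D) \<le> (real q ^ m) ^ t / A_fun q m t / (real q ^ m) ^ D * A_fun q m w"
proof -
  define Q where "Q = real q ^ m"
  have Q: "Q > 0" using q_pos by (simp add: Q_def)
  have At: "A_fun q m t > 0" using A_fun_pos assms by simp
  have Aw: "A_fun q m w > 0" using A_fun_pos assms by simp
  have b: "A_fun q m t \<le> A_fun q m w * Q ^ (t - w)" using Ar_bound assms by (simp add: Q_def)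
  have "Q ^ (w - D) * (A_fun q m t * Q ^ D) = Q ^ w * A_fun q m t"
    using assms by (simp add: power_add[symmetric] mult_ac)
  also have "\<dots> \<le> Q ^ w * (A_fun q m w * Q ^ (t - w))" using b Q by (intro mult_left_mono) auto
  also have "\<dots> = Q ^ t * A_fun q m w" using assms by (simp add: power_add[symmetric] mult_ac)
  finally have "Q ^ (w - D) * (A_fun q m t * Q ^ D) \<le> Q ^ t * A_fun q m w" .
  hence "Q ^ (w - D) \<le> Q ^ t * A_fun q m w / (A_fun q m t * Q ^ D)"
    using At Q by (simp add: pos_le_divide_eq)
  thus ?thesis by (simp add: Q_def field_simps)
qed

lemma vdiff_zeros: "length z = d \<Longrightarrow> vdiff z (replicate d 0) = z"
  by (intro nth_equalityI) (auto simp: nth_vdiff)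

lemma dimL_eq_of_Rel:
  assumes "length z = d" "length z' = d" "Rel z = Rel z'"
  shows "A.dimL z = A.dimL z'"
proof -
  have "q ^ (d - rk FF z) = q ^ (d - rk FF z')" using card_Rel[of z] card_Rel[of z'] assms by simp
  hence "d - rk FF z = d - rk FF z'" by (rule A.qq_pow_inj)
  thus ?thesis using rk_le_length[of z] rk_le_length[of z'] assms by (simp add: rk_dimL)
qed

lemma proj_bound:
  assumes P: "P \<subseteq> Ln d"
    and distP: "\<And>z z'. z \<in> P \<Longrightarrow> z' \<in> P \<Longrightarrow> z \<noteq> z' \<Longrightarrow> A.dimL (vdiff z z') \<ge> d - k + 1"
    and L: "V.subsp L" "L \<subseteq> Fn d" "card L = q ^ (d - w)" and w: "w \<le> d" "d - w \<le> k" and kd: "k \<le> d"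
  shows "card {z \<in> P. L \<subseteq> Rel z} \<le> (q ^ m) ^ (k - (d - w))"
proof -
  obtain hs2 hs1 where B: "is_basis d (hs2 @ hs1)" "V.spL hs1 = L" "set hs1 \<subseteq> L" "V.dimL hs1 = length hs1"
    using adapted_basis[OF L(1,2)] by blast
  have l1: "length hs1 = d - w"
    using V.card_spL[of hs1] B(2,4) L(3) V.qq_pow_inj by metis
  have l2: "length hs2 = w" using is_basis_length[OF B(1)] l1 w by simp
  define ks where "ks = drop (d - k) hs2 @ hs1"
  have ks_eq: "ks = drop (d - k) (hs2 @ hs1)" using l2 w kd by (simp add: ks_def)
  have lk: "length ks = k" using l1 l2 w kd by (simp add: ks_def)
  have dks: "V.dimL ks = length ks"
    using V.dimL_drop[of "hs2 @ hs1" "d - k"] B(1) unfolding is_basis_def ks_eq by simp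
  have ksF: "set ks \<subseteq> Fn d"
    using B(1) set_drop_subset[of "d - k" "hs2 @ hs1"] unfolding is_basis_def ks_eq by blast
  have cks: "card (V.spL ks) = q ^ k" using V.card_spL[of ks] dks lk by simp
  have hs1F: "set hs1 \<subseteq> Fn d" using B(3) L(2) by blast
  have inj: "inj_on (psi ks) P"
  proof (rule inj_onI, rule ccontr)
    fix z z' assume zz: "z \<in> P" "z' \<in> P" "psi ks z = psi ks z'" "z \<noteq> z'"
    have lz: "length z = d" "length z' = d" using zz P by (auto simp: Ln_def)
    have "\<forall>h\<in>set ks. phi z h = phi z' h" using zz(3) unfolding psi_def by (simp add: map_eq_conv)
    hence "\<forall>h\<in>set ks. phi (vdiff z z') h = 0" using lz by (simp add: phi_vdiff)
    hence "psi ks (vdiff z z') = replicate (length ks) 0"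
      unfolding psi_def by (intro nth_equalityI) auto
    hence "V.spL ks \<subseteq> Rel (vdiff z z')" using Rel_ge_iff[of ks "vdiff z z'"] ksF lz by simp
    hence "card (V.spL ks) \<le> card (Rel (vdiff z z'))" by (intro card_mono finite_Rel)
    hence "q ^ k \<le> q ^ (d - rk FF (vdiff z z'))" using cks card_Rel[of "vdiff z z'"] lz by simp
    hence "k \<le> d - rk FF (vdiff z z')" using A.qq_pow_le by simp
    hence "k \<le> d - A.dimL (vdiff z z')" by (simp add: rk_dimL)
    moreover have "A.dimL (vdiff z z') \<le> d" using A.dimL_le[of "vdiff z z'"] lz by simp
    ultimately have "A.dimL (vdiff z z') \<le> d - k" by arith
    moreover have "A.dimL (vdiff z z') \<ge> d - k + 1" using distP zz by blast
    ultimately show False using kd by simp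
  qed
  have img: "psi ks ` {z \<in> P. L \<subseteq> Rel z} \<subseteq> (\<lambda>a. a @ replicate (d - w) 0) ` Ln (k - (d - w))"
  proof
    fix b assume "b \<in> psi ks ` {z \<in> P. L \<subseteq> Rel z}"
    then obtain z where z: "z \<in> P" "L \<subseteq> Rel z" "b = psi ks z" by auto
    have lz: "length z = d" using z P by (auto simp: Ln_def)
    have "psi hs1 z = replicate (d - w) 0" using Rel_ge_iff[of hs1 z] hs1F lz z(2) B(2) l1 by simp
    hence "b = psi (drop (d - k) hs2) z @ replicate (d - w) 0" using z(3) by (simp add: ks_def psi_append)
    moreover have "psi (drop (d - k) hs2) z \<in> Ln (k - (d - w))" using l2 w kd by (simp add: Ln_def)
    ultimately show "b \<in> (\<lambda>a. a @ replicate (d - w) 0) ` Ln (k - (d - w))" by blast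
  qed
  have "card {z \<in> P. L \<subseteq> Rel z} = card (psi ks ` {z \<in> P. L \<subseteq> Rel z})"
    by (rule card_image[symmetric]) (rule inj_on_subset[OF inj], auto)
  also have "\<dots> \<le> card ((\<lambda>a. a @ replicate (d - w) 0) ` Ln (k - (d - w)))"
    by (intro card_mono img) (simp add: finite_Ln)
  also have "\<dots> \<le> card (Ln (k - (d - w)))" by (intro card_image_le finite_Ln)
  also have "\<dots> = (q ^ m) ^ (k - (d - w))" by (rule card_Ln)
  finally show ?thesis .
qed

lemma group_bound:
  assumes P: "P \<subseteq> Ln d" "replicate d 0 \<in> P"
    and distP: "\<And>z z'. z \<in> P \<Longrightarrow> z' \<in> P \<Longrightarrow> z \<noteq> z' \<Longrightarrow> A.dimL (vdiff z z') \<ge> d - k + 1"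
    and kd: "k \<le> d" and tm: "t \<le> m"
  shows "(\<Sum>z\<in>P - {replicate d 0}. real (Phi u t z))
         \<le> (real q ^ m) ^ t / A_fun q m t / (real q ^ m) ^ (d - k) * (\<Sum>z\<in>Ln d. real (Phi u t z))"
proof -
  define Bc where "Bc = (real q ^ m) ^ t / A_fun q m t / (real q ^ m) ^ (d - k)"
  have Bc0: "Bc \<ge> 0" unfolding Bc_def using A_fun_pos[OF tm] by simp
  define P' where "P' = P - {replicate d 0}"
  define f where "f z = real (Phi u t z)" for z
  have finP': "finite P'" unfolding P'_def using P(1) finite_subset[OF _ finite_Ln] by blast
  have P'sub: "P' \<subseteq> Ln d" unfolding P'_def using P by auto
  have perL: "(\<Sum>z\<in>{z. z \<in> P' \<and> Rel z = L}. f z) \<le> Bc * (\<Sum>z\<in>{z. z \<in> Ln d \<and> Rel z = L}. f z)"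
    if L: "L \<in> Rel ` P'" for L
  proof -
    obtain z0 where z0: "z0 \<in> P'" "Rel z0 = L" using L by auto
    have lz0: "length z0 = d" using z0 P'sub by (auto simp: Ln_def)
    define w where "w = A.dimL z0"
    define \<phi> where "\<phi> = fPhi q m t u w"
    have fz: "f z = real \<phi>" if "length z = d" "Rel z = L" for z
      using dimL_eq_of_Rel[of z d z0] that z0 lz0 Phi_eq[of u t z] unfolding f_def \<phi>_def w_def by simp
    have wd: "w \<le> d" using A.dimL_le[of z0] lz0 unfolding w_def by simp
    have cL: "card L = q ^ (d - w)" using card_Rel[of z0] z0 lz0 unfolding w_def by (simp add: rk_dimL)
    have Lsub: "L \<subseteq> Fn d" using Rel_sub[of z0] z0 lz0 by simp
    have Lsubsp: "V.subsp L" using Rel_subsp z0 by blast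
    have RHS: "(\<Sum>z\<in>{z. z \<in> Ln d \<and> Rel z = L}. f z) = real (\<Prod>i<w. q ^ m - q ^ i) * real \<phi>"
    proof -
      have "(\<Sum>z\<in>{z. z \<in> Ln d \<and> Rel z = L}. f z) = (\<Sum>z\<in>{z. z \<in> Ln d \<and> Rel z = L}. real \<phi>)"
        using fz by (intro sum.cong) (auto simp: Ln_def)
      also have "\<dots> = real (card {z \<in> Ln d. Rel z = L}) * real \<phi>" by simp
      finally show ?thesis using REL_count[OF Lsubsp Lsub cL wd] by simp
    qed
    have LHS: "(\<Sum>z\<in>{z. z \<in> P' \<and> Rel z = L}. f z) = real (card {z \<in> P'. Rel z = L}) * real \<phi>"
    proof -
      have "(\<Sum>z\<in>{z. z \<in> P' \<and> Rel z = L}. f z) = (\<Sum>z\<in>{z. z \<in> P' \<and> Rel z = L}. real \<phi>)"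
        using fz P'sub by (intro sum.cong) (auto simp: Ln_def)
      thus ?thesis by simp
    qed
    show ?thesis
    proof (cases "\<phi> = 0")
      case True thus ?thesis using LHS RHS by simp
    next
      case False
      have "Phi u t z0 > 0" using False Phi_eq[of u t z0] unfolding \<phi>_def w_def by simp
      hence wt: "w \<le> t" using Phi_pos_le unfolding w_def by blast
      have "z0 \<noteq> replicate d 0" "z0 \<in> P" using z0 unfolding P'_def by auto
      hence "A.dimL (vdiff z0 (replicate d 0)) \<ge> d - k + 1" using distP P(2) by blast
      hence wk: "d - k + 1 \<le> w" using vdiff_zeros[OF lz0] unfolding w_def by simp
      have "card {z \<in> P'. Rel z = L} \<le> card {z \<in> P. L \<subseteq> Rel z}"
        using finite_subset[OF P(1) finite_Ln] unfolding P'_def by (intro card_mono) auto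
      also have "\<dots> \<le> (q ^ m) ^ (k - (d - w))"
        using proj_bound[OF P(1) distP Lsubsp Lsub cL wd _ kd] wk kd by simp
      moreover have "k - (d - w) = w - (d - k)" using wk kd wd by arith
      ultimately have c0: "card {z \<in> P'. Rel z = L} \<le> (q ^ m) ^ (w - (d - k))" by simp
      hence "real (card {z \<in> P'. Rel z = L}) \<le> real ((q ^ m) ^ (w - (d - k)))" by (simp only: of_nat_le_iff)
      hence c1: "real (card {z \<in> P'. Rel z = L}) \<le> (real q ^ m) ^ (w - (d - k))" by simp
      also have "\<dots> \<le> Bc * A_fun q m w"
        unfolding Bc_def using key_real[of "d - k" w t] wk wt tm by simp
      also have "A_fun q m w = real (\<Prod>i<w. q ^ m - q ^ i)" using A_fun_nat wt tm by simp
      finally have "real (card {z \<in> P'. Rel z = L}) * real \<phi> \<le> Bc * real (\<Prod>i<w. q ^ m - q ^ i) * real \<phi>"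
        by (intro mult_right_mono) auto
      thus ?thesis using LHS RHS by (simp add: mult.assoc)
    qed
  qed
  have finLd: "finite (Ln d)" by (rule finite_Ln)
  have "(\<Sum>z\<in>P'. f z) = (\<Sum>L\<in>Rel ` P'. \<Sum>z\<in>{z. z \<in> P' \<and> Rel z = L}. f z)"
    by (rule sum.image_gen[OF finP'])
  also have "\<dots> \<le> (\<Sum>L\<in>Rel ` P'. Bc * (\<Sum>z\<in>{z. z \<in> Ln d \<and> Rel z = L}. f z))"
    using perL by (intro sum_mono) auto
  also have "\<dots> \<le> (\<Sum>L\<in>Rel ` Ln d. Bc * (\<Sum>z\<in>{z. z \<in> Ln d \<and> Rel z = L}. f z))"
    using P'sub Bc0 by (intro sum_mono2 finite_imageI finLd) (auto simp: f_def intro!: sum_nonneg mult_nonneg_nonneg)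
  also have "\<dots> = Bc * (\<Sum>L\<in>Rel ` Ln d. \<Sum>z\<in>{z. z \<in> Ln d \<and> Rel z = L}. f z)"
    by (simp add: sum_distrib_left)
  also have "(\<Sum>L\<in>Rel ` Ln d. \<Sum>z\<in>{z. z \<in> Ln d \<and> Rel z = L}. f z) = (\<Sum>z\<in>Ln d. f z)"
    by (rule sum.image_gen[OF finLd, symmetric])
  finally show ?thesis unfolding Bc_def P'_def f_def .
qed

end

context ffield begin

lemma psi_vdiff:
  assumes "length y = length c"
  shows "psi hs (vdiff y c) = vdiff (psi hs y) (psi hs c)"
  using assms by (intro nth_equalityI) (auto simp: psi_def phi_vdiff nth_vdiff)

lemma vdiff_zeros_left: "length z = d \<Longrightarrow> vdiff (replicate d 0) z = map uminus z"
  by (intro nth_equalityI) (auto simp: nth_vdiff)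

lemma vdiff_self: "vdiff z z = replicate (length z) 0"
  by (intro nth_equalityI) (auto simp: nth_vdiff)

lemma psi_zeros: "psi hs (replicate n 0) = replicate (length hs) 0"
  by (intro nth_equalityI) (auto simp: psi_def phi_def)

lemma XR_bound:
  fixes C :: "'a list set"
  assumes C: "C \<subseteq> Ln n" "replicate n 0 \<in> C"
    and dist: "\<And>c c'. c \<in> C \<Longrightarrow> c' \<in> C \<Longrightarrow> c \<noteq> c' \<Longrightarrow> A.dimL (vdiff c c') \<ge> n - k + 1"
    and ku: "u + k \<le> n" and tu: "t < u" and tm: "t \<le> m"
    and R: "R \<in> Sub n (n - u)"
  shows "real (card {y \<in> Ln n. Rel y = R \<and> (\<exists>c\<in>C. A.dimL (vdiff y c) \<le> t)})
         \<le> (real q ^ m) ^ t / A_fun q m t / (real q ^ m) ^ (n - u - k) * real (card {ev \<in> Ln n. A.dimL ev \<le> t})"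
proof -
  define d where "d = n - u"
  have Rs: "V.subsp R" "R \<subseteq> Fn n" "card R = q ^ d" using R unfolding Sub_def d_def by auto
  obtain hs2 hs1 where B: "is_basis n (hs2 @ hs1)" "V.spL hs1 = R" "set hs1 \<subseteq> R" "V.dimL hs1 = length hs1"
    using adapted_basis[OF Rs(1,2)] by blast
  have l1: "length hs1 = d" using V.card_spL[of hs1] B(2,4) Rs(3) V.qq_pow_inj by metis
  have l2: "length hs2 = u" using is_basis_length[OF B(1)] l1 ku unfolding d_def by simp
  have hs1F: "set hs1 \<subseteq> Fn n" using B(3) Rs(2) by blast
  define zd where "zd = replicate d (0::'a)"
  have F1: "R \<subseteq> Rel y \<longleftrightarrow> psi hs1 y = zd" if "length y = n" for y
    using Rel_ge_iff[of hs1 y] hs1F that B(2) l1 unfolding zd_def by simp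
  have F3: "A.dimL ev = A.dimL (psi hs2 ev @ psi hs1 ev)" if "length ev = n" for ev
    using dimL_psi[OF B(1) that] by (simp add: psi_append)
  have F4: "A.dimL c \<le> u" if "length c = n" "R \<subseteq> Rel c" for c
  proof -
    have "card R \<le> card (Rel c)" using that by (intro card_mono finite_Rel)
    hence "q ^ (n - u) \<le> q ^ (n - rk FF c)" using Rs(3) card_Rel[of c] that unfolding d_def by simp
    hence "n - u \<le> n - rk FF c" using A.qq_pow_le by simp
    thus ?thesis using rk_le_length[of c] that ku by (simp add: rk_dimL)
  qed
  have F4': "A.dimL y = u" if "length y = n" "Rel y = R" for y
  proof -
    have "q ^ (n - rk FF y) = q ^ (n - u)" using card_Rel[of y] that Rs(3) unfolding d_def by simp
    hence "n - rk FF y = n - u" by (rule A.qq_pow_inj)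
    thus ?thesis using rk_le_length[of y] that ku by (simp add: rk_dimL)
  qed
  define C' where "C' = {c \<in> C. psi hs1 c \<noteq> zd}"
  define E where "E c = {ev \<in> Ln n. A.dimL ev \<le> t \<and> psi hs1 ev = map uminus (psi hs1 c)}" for c
  define Q where "Q = Sigma C' E"
  define X where "X = {y \<in> Ln n. Rel y = R \<and> (\<exists>c\<in>C. A.dimL (vdiff y c) \<le> t)}"
  have finC: "finite C" using C(1) finite_subset[OF _ finite_Ln] by blast
  have finE: "finite (E c)" for c unfolding E_def using finite_Ln by simp
  have finQ: "finite Q" unfolding Q_def C'_def using finC finE by (intro finite_SigmaI) auto
  have Xsub: "X \<subseteq> (\<lambda>(c, ev). map2 (+) c ev) ` Q"
  proof
    fix y assume "y \<in> X"
    then obtain c where y: "length y = n" "Rel y = R" and c: "c \<in> C" "A.dimL (vdiff y c) \<le> t"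
      unfolding X_def Ln_def by blast
    have lc: "length c = n" using c C(1) by (auto simp: Ln_def)
    define ev where "ev = vdiff y c"
    have lev: "length ev = n" using y lc by (simp add: ev_def)
    have Py: "psi hs1 y = zd" using F1[OF y(1)] y(2) by simp
    have Pev: "psi hs1 ev = map uminus (psi hs1 c)"
      unfolding ev_def using psi_vdiff[of y c hs1] y lc Py vdiff_zeros_left[of "psi hs1 c" d] l1
      by (simp add: zd_def)
    have cnz: "psi hs1 c \<noteq> zd"
    proof
      assume P0: "psi hs1 c = zd"
      hence "A.dimL c \<le> u" using F4[OF lc] F1[OF lc] by simp
      have "c = replicate n 0"
      proof (rule ccontr)
        assume "c \<noteq> replicate n 0"
        hence "A.dimL (vdiff c (replicate n 0)) \<ge> n - k + 1" using dist c(1) C(2) by blast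
        hence "A.dimL c \<ge> n - k + 1" using vdiff_zeros[OF lc] by simp
        thus False using \<open>A.dimL c \<le> u\<close> ku by simp
      qed
      hence "ev = y" using vdiff_zeros[OF y(1)] by (simp add: ev_def)
      hence "A.dimL y \<le> t" using c(2) ev_def by simp
      thus False using F4'[OF y] tu by simp
    qed
    have "(c, ev) \<in> Q" unfolding Q_def C'_def E_def using c cnz lev Pev ev_def by (auto simp: Ln_def)
    moreover have "y = map2 (+) c ev" using y lc unfolding ev_def
      by (intro nth_equalityI) (auto simp: nth_vdiff)
    ultimately show "y \<in> (\<lambda>(c, ev). map2 (+) c ev) ` Q" by force
  qed
  have cX: "card X \<le> card Q"
    using card_mono[OF finite_imageI[OF finQ] Xsub] card_image_le[OF finQ, of "\<lambda>(c, ev). map2 (+) c ev"]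
    by linarith
  have F5: "card {ev \<in> Ln n. A.dimL ev \<le> t \<and> psi hs1 ev = z} = Phi u t z" if z: "length z = d" for z
  proof -
    have "bij_betw (psi hs2) {ev \<in> Ln n. A.dimL ev \<le> t \<and> psi hs1 ev = z} {g \<in> Ln u. A.dimL (g @ z) \<le> t}"
    proof (rule bij_betwI')
      fix ev ev' assume "ev \<in> {ev \<in> Ln n. A.dimL ev \<le> t \<and> psi hs1 ev = z}" "ev' \<in> {ev \<in> Ln n. A.dimL ev \<le> t \<and> psi hs1 ev = z}"
      hence e: "length ev = n" "length ev' = n" "psi hs1 ev = z" "psi hs1 ev' = z" by (auto simp: Ln_def)
      show "(psi hs2 ev = psi hs2 ev') = (ev = ev')"
      proof
        assume "psi hs2 ev = psi hs2 ev'"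
        hence "psi (hs2 @ hs1) ev = psi (hs2 @ hs1) ev'" using e by (simp add: psi_append)
        thus "ev = ev'" using psi_inj[OF B(1) e(1,2)] by simp
      qed simp
    next
      fix ev assume "ev \<in> {ev \<in> Ln n. A.dimL ev \<le> t \<and> psi hs1 ev = z}"
      thus "psi hs2 ev \<in> {g \<in> Ln u. A.dimL (g @ z) \<le> t}" using F3 l2 by (auto simp: Ln_def)
    next
      fix g assume g: "g \<in> {g \<in> Ln u. A.dimL (g @ z) \<le> t}"
      obtain ev where ev: "length ev = n" "psi (hs2 @ hs1) ev = g @ z"
        using psi_surj'[OF B(1), of "g @ z"] g z ku unfolding Ln_def d_def by auto
      have "psi hs2 ev = g" "psi hs1 ev = z" using ev(2) g l2 by (simp_all add: psi_append Ln_def)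
      moreover have "A.dimL ev \<le> t" using F3[OF ev(1)] g \<open>psi hs2 ev = g\<close> \<open>psi hs1 ev = z\<close> by simp
      ultimately show "\<exists>ev\<in>{ev \<in> Ln n. A.dimL ev \<le> t \<and> psi hs1 ev = z}. g = psi hs2 ev"
        using ev(1) by (auto simp: Ln_def)
    qed
    thus ?thesis unfolding Phi_def by (rule bij_betw_same_card)
  qed
  have injC: "inj_on (psi hs1) C"
  proof (rule inj_onI, rule ccontr)
    fix c c' assume cc: "c \<in> C" "c' \<in> C" "psi hs1 c = psi hs1 c'" "c \<noteq> c'"
    have lc: "length c = n" "length c' = n" using cc C(1) by (auto simp: Ln_def)
    have "psi hs1 (vdiff c c') = zd" using psi_vdiff[of c c' hs1] lc cc(3) l1
      by (simp add: zd_def vdiff_self)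
    hence "A.dimL (vdiff c c') \<le> u" using F4[of "vdiff c c'"] F1[of "vdiff c c'"] lc by simp
    moreover have "A.dimL (vdiff c c') \<ge> n - k + 1" using dist cc by blast
    ultimately show False using ku by simp
  qed
  have "card Q = (\<Sum>c\<in>C'. card (E c))" unfolding Q_def C'_def using finC finE by (simp add: card_SigmaI)
  also have "\<dots> = (\<Sum>c\<in>C'. Phi u t (psi hs1 c))"
  proof (rule sum.cong[OF refl])
    fix c assume "c \<in> C'"
    have lp: "length (map uminus (psi hs1 c)) = d" using l1 by simp
    have "card (E c) = Phi u t (map uminus (psi hs1 c))" unfolding E_def by (rule F5[OF lp])
    thus "card (E c) = Phi u t (psi hs1 c)" by (simp add: Phi_eq A.dimL_uminus)
  qed
  also have "\<dots> = (\<Sum>z\<in>psi hs1 ` C'. Phi u t z)"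
  proof -
    have injC': "inj_on (psi hs1) C'" by (rule inj_on_subset[OF injC]) (auto simp: C'_def)
    show ?thesis by (simp add: sum.reindex[OF injC'])
  qed
  finally have cQ: "card Q = (\<Sum>z\<in>psi hs1 ` C'. Phi u t z)" .
  define P where "P = psi hs1 ` C"
  have PC': "psi hs1 ` C' = P - {zd}" unfolding P_def C'_def by auto
  have Psub: "P \<subseteq> Ln d" unfolding P_def using l1 by (auto simp: Ln_def)
  have P0: "zd \<in> P" unfolding P_def zd_def using C(2) psi_zeros[of hs1 n] l1 by force
  have distP: "A.dimL (vdiff z z') \<ge> d - k + 1" if zz: "z \<in> P" "z' \<in> P" "z \<noteq> z'" for z z'
  proof -
    obtain c c' where cc: "c \<in> C" "c' \<in> C" "z = psi hs1 c" "z' = psi hs1 c'" using zz unfolding P_def by auto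
    have lc: "length c = n" "length c' = n" using cc C(1) by (auto simp: Ln_def)
    have "c \<noteq> c'" using zz cc by auto
    hence "n - k + 1 \<le> A.dimL (vdiff c c')" using dist cc by blast
    also have "\<dots> = A.dimL (psi hs2 (vdiff c c') @ psi hs1 (vdiff c c'))" using F3[of "vdiff c c'"] lc by simp
    also have "\<dots> \<le> A.dimL (psi hs2 (vdiff c c')) + A.dimL (psi hs1 (vdiff c c'))" by (rule A.dimL_append_le2)
    also have "A.dimL (psi hs2 (vdiff c c')) \<le> u" using A.dimL_le[of "psi hs2 (vdiff c c')"] l2 by simp
    also have "psi hs1 (vdiff c c') = vdiff z z'" using psi_vdiff[of c c' hs1] lc cc by simp
    finally show ?thesis using ku unfolding d_def by simp
  qed
  have kd: "k \<le> d" using ku unfolding d_def by simp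
  have "real (card X) \<le> real (card Q)" using cX by simp
  also have "\<dots> = (\<Sum>z\<in>P - {replicate d 0}. real (Phi u t z))" using cQ PC' by (simp add: zd_def)
  also have "\<dots> \<le> (real q ^ m) ^ t / A_fun q m t / (real q ^ m) ^ (d - k) * (\<Sum>z\<in>Ln d. real (Phi u t z))"
    using group_bound[OF Psub P0[unfolded zd_def] distP kd tm] by simp
  also have "(\<Sum>z\<in>Ln d. real (Phi u t z)) = real (card {ev \<in> Ln n. A.dimL ev \<le> t})"
    using sum_Phi[of u t d] ku unfolding d_def by (simp flip: of_nat_sum)
  finally show ?thesis unfolding X_def d_def by simp
qed

end

lemma prod_split_add: fixes f :: "nat \<Rightarrow> real" shows "(\<Prod>i<j + l. f i) = (\<Prod>i<j. f i) * (\<Prod>i<l. f (j + i))"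
  by (induction l) (simp_all add: mult.assoc)

lemma A_fun_full:
  assumes "j \<le> n"
  shows "A_fun q n n = A_fun q n j * (real q) ^ (j * (n - j)) * A_fun q (n - j) (n - j)"
proof -
  have "A_fun q n n = (\<Prod>i<j + (n - j). real q ^ n - real q ^ i)" using assms by (simp add: A_fun_def)
  also have "\<dots> = A_fun q n j * (\<Prod>i<n - j. real q ^ n - real q ^ (j + i))"
    by (simp add: prod_split_add A_fun_def)
  also have "(\<Prod>i<n - j. real q ^ n - real q ^ (j + i)) = (\<Prod>i<n - j. real q ^ j * (real q ^ (n - j) - real q ^ i))"
    using assms by (intro prod.cong) (auto simp: algebra_simps power_add[symmetric])
  also have "\<dots> = (real q ^ j) ^ (n - j) * A_fun q (n - j) (n - j)"
    by (simp add: prod.distrib A_fun_def)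
  finally show ?thesis by (simp add: power_mult mult.assoc)
qed

lemma gauss_sym:
  assumes "j \<le> n" "q \<ge> 2"
  shows "gauss_binom q n j = gauss_binom q n (n - j)"
proof -
  have pos: "A_fun q a a > 0" for a unfolding A_fun_def using assms(2)
    by (intro prod_pos) (auto intro!: power_strict_increasing)
  have Qp: "(real q) ^ (j * (n - j)) > 0" using assms(2) by simp
  have e1: "A_fun q n n = A_fun q n j * (real q) ^ (j * (n - j)) * A_fun q (n - j) (n - j)"
    by (rule A_fun_full[OF assms(1)])
  have e2: "A_fun q n n = A_fun q n (n - j) * (real q) ^ (j * (n - j)) * A_fun q j j"
    using A_fun_full[of "n - j" n q] assms(1) by (simp add: mult.commute)
  have E: "A_fun q n j * (real q) ^ (j * (n - j)) * A_fun q (n - j) (n - j)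
          = A_fun q n (n - j) * (real q) ^ (j * (n - j)) * A_fun q j j"
    by (rule trans[OF e1[symmetric] e2])
  hence "(A_fun q n j * A_fun q (n - j) (n - j)) * (real q) ^ (j * (n - j))
        = (A_fun q n (n - j) * A_fun q j j) * (real q) ^ (j * (n - j))" by (simp add: ac_simps)
  hence E2: "A_fun q n j * A_fun q (n - j) (n - j) = A_fun q n (n - j) * A_fun q j j" using Qp assms(2) by simp
  have "A_fun q j j \<noteq> 0" "A_fun q (n - j) (n - j) \<noteq> 0" using pos[of j] pos[of "n - j"] by auto
  thus ?thesis unfolding gauss_binom_def using E2 by (simp add: frac_eq_eq)
qed

lemma geom_le: "q \<ge> 2 \<Longrightarrow> (\<Sum>i<t. real q ^ i) \<le> real q ^ t - 1"
proof (induction t)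
  case (Suc t)
  have "(\<Sum>i<Suc t. real q ^ i) \<le> real q ^ t - 1 + real q ^ t" using Suc by simp
  also have "\<dots> \<le> real q ^ Suc t - 1" using Suc.prems by simp
  finally show ?case .
qed simp

lemma prod_ge:
  fixes a :: real
  assumes "a \<ge> 0" "\<And>i. i < t \<Longrightarrow> 0 \<le> b i \<and> b i \<le> a"
  shows "(\<Prod>i<t. a - b i) * a \<ge> a ^ t * (a - (\<Sum>i<t. b i))"
  using assms(2)
proof (induction t)
  case (Suc t)
  define S where "S = (\<Sum>i<t. b i)"
  have S0: "S \<ge> 0" unfolding S_def using Suc.prems by (intro sum_nonneg) auto
  have bt: "0 \<le> b t" "b t \<le> a" using Suc.prems by auto
  have IH: "(\<Prod>i<t. a - b i) * a \<ge> a ^ t * (a - S)" using Suc unfolding S_def by auto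
  have nn: "a ^ t * S * b t \<ge> 0" using S0 bt assms(1) by (intro mult_nonneg_nonneg) auto
  have "a ^ Suc t * (a - (S + b t)) \<le> a ^ Suc t * (a - (S + b t)) + a ^ t * S * b t" using nn by simp
  also have "\<dots> = a ^ t * (a - S) * (a - b t)" by (simp add: algebra_simps)
  also have "\<dots> \<le> ((\<Prod>i<t. a - b i) * a) * (a - b t)" using IH bt by (intro mult_right_mono) auto
  also have "\<dots> = (\<Prod>i<Suc t. a - b i) * a" by (simp add: mult_ac)
  finally show ?case by (simp add: S_def)
qed simp

context ffield begin

lemma K_bound:
  assumes "t + 2 \<le> m"
  shows "(real q ^ m) ^ t / A_fun q m t < real q ^ 2 / (real q ^ 2 - 1)"
proof -
  define Q where "Q = real q ^ m"
  define S where "S = (\<Sum>i<t. real q ^ i)"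
  have q2: "real q \<ge> 2" using q_ge2 by simp
  have Q: "Q > 0" using q2 by (simp add: Q_def)
  have A: "A_fun q m t > 0" using A_fun_pos assms by simp
  have pg: "A_fun q m t * Q \<ge> Q ^ t * (Q - S)"
    unfolding A_fun_def Q_def S_def
  proof (rule prod_ge)
    fix i assume "i < t"
    thus "0 \<le> real q ^ i \<and> real q ^ i \<le> real q ^ m" using q2 assms by (auto intro!: power_increasing)
  qed (use q2 in simp)
  have "S \<le> real q ^ t - 1" unfolding S_def using geom_le q_ge2 by simp
  also have "real q ^ t \<le> real q ^ (m - 2)" using q2 assms by (intro power_increasing) auto
  finally have S: "S < real q ^ (m - 2)" by simp
  have Qm: "Q = real q ^ (m - 2) * real q ^ 2"
  proof -
    have "Q = real q ^ ((m - 2) + 2)" unfolding Q_def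
      by (rule arg_cong[where f="\<lambda>x. real q ^ x"]) (use assms in arith)
    also have "\<dots> = real q ^ (m - 2) * real q ^ 2" by (rule power_add)
    finally show ?thesis .
  qed
  have "Q ^ t * (Q * (real q ^ 2 - 1)) = Q ^ t * (Q - real q ^ (m - 2)) * real q ^ 2"
    using Qm by (simp add: algebra_simps)
  also have "\<dots> < Q ^ t * (Q - S) * real q ^ 2" using S Q q2 by (intro mult_strict_right_mono mult_strict_left_mono) auto
  also have "\<dots> \<le> A_fun q m t * Q * real q ^ 2" using pg q2 by (intro mult_right_mono) auto
  finally have "Q ^ t * (real q ^ 2 - 1) < A_fun q m t * real q ^ 2" using Q by (simp add: mult_ac)
  hence "Q ^ t < A_fun q m t * real q ^ 2 / (real q ^ 2 - 1)" using q2 by (simp add: pos_less_divide_eq)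
  hence "Q ^ t / A_fun q m t < real q ^ 2 / (real q ^ 2 - 1)" using A by (simp add: divide_less_eq mult_ac)
  thus ?thesis by (simp add: Q_def)
qed

lemma card_Sub: "j \<le> n \<Longrightarrow> real (card (Sub n j)) = gauss_binom q n j"
proof -
  assume jn: "j \<le> n"
  have "real (card (Sub n j)) * A_fun q j j = A_fun q n j"
    using SUB_count[of n j] A_fun_nat[of j j] A_fun_nat[of j n] jn by (metis of_nat_mult order_refl)
  thus ?thesis unfolding gauss_binom_def using A_fun_pos[of j j] by (simp add: eq_divide_eq)
qed

lemma finite_Sub: "finite (Sub n j)"
proof -
  have "Sub n j \<subseteq> Pow (Fn n)" unfolding Sub_def by auto
  thus ?thesis using finite_Fn finite_subset by blast
qed

lemma N_rank_nonneg: "N_rank q m n i \<ge> 0"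
proof (cases "i \<le> n")
  case True
  have "A_fun q n i \<ge> 0" "A_fun q i i > 0" using A_fun_nonneg A_fun_pos True by auto
  moreover have "A_fun q m i \<ge> 0 \<or> True" by simp
  show ?thesis
  proof (cases "i \<le> m")
    case True
    thus ?thesis unfolding N_rank_def gauss_binom_def
      using A_fun_nonneg[of i n] A_fun_pos[of i i] A_fun_nonneg[of i m] \<open>i \<le> n\<close> by simp
  next
    case False
    have "A_fun q m i = 0" unfolding A_fun_def using False by (intro prod_zero bexI[of _ m]) auto
    thus ?thesis by (simp add: N_rank_def)
  qed
next
  case False
  have "A_fun q n i = 0" unfolding A_fun_def using False by (intro prod_zero bexI[of _ n]) auto
  thus ?thesis by (simp add: N_rank_def gauss_binom_def)
qed

lemma E_bound:
  assumes nm: "n \<le> m"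
  shows "real (card {ev \<in> Ln n. A.dimL ev \<le> t}) \<le> V_ball q m n t"
proof -
  define S where "S = {ev \<in> Ln n. A.dimL ev \<le> t}"
  have finS: "finite S" unfolding S_def using finite_Ln by simp
  have per: "real (card {ev \<in> S. A.dimL ev = i}) \<le> N_rank q m n i" for i
  proof (cases "i \<le> n")
    case False
    have E: "{ev \<in> S. A.dimL ev = i} = {}" using A.dimL_le False unfolding S_def Ln_def by force
    show ?thesis by (simp only: E card.empty of_nat_0 N_rank_nonneg)
  next
    case True
    have sub: "{ev \<in> S. A.dimL ev = i} \<subseteq> (\<Union>L\<in>Sub n (n - i). {ev \<in> Ln n. Rel ev = L})"
    proof
      fix ev assume "ev \<in> {ev \<in> S. A.dimL ev = i}"
      hence ev: "length ev = n" "A.dimL ev = i" unfolding S_def Ln_def by auto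
      have "Rel ev \<in> Sub n (n - i)" unfolding Sub_def
        using Rel_subsp[of ev] Rel_sub[of ev] card_Rel[of ev] ev by (simp add: rk_dimL)
      thus "ev \<in> (\<Union>L\<in>Sub n (n - i). {ev \<in> Ln n. Rel ev = L})" using ev by (auto simp: Ln_def)
    qed
    have "card {ev \<in> S. A.dimL ev = i} \<le> card (\<Union>L\<in>Sub n (n - i). {ev \<in> Ln n. Rel ev = L})"
      using finite_Sub finite_Ln by (intro card_mono sub) auto
    also have "\<dots> \<le> (\<Sum>L\<in>Sub n (n - i). card {ev \<in> Ln n. Rel ev = L})" by (rule card_UN_le[OF finite_Sub])
    also have "\<dots> = (\<Sum>L\<in>Sub n (n - i). (\<Prod>j<i. q ^ m - q ^ j))"
      by (intro sum.cong refl REL_count) (use True in \<open>auto simp: Sub_def\<close>)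
    also have "\<dots> = card (Sub n (n - i)) * (\<Prod>j<i. q ^ m - q ^ j)" by simp
    finally have "real (card {ev \<in> S. A.dimL ev = i}) \<le> real (card (Sub n (n - i))) * real (\<Prod>j<i. q ^ m - q ^ j)"
      by (simp only: of_nat_le_iff of_nat_mult[symmetric])
    also have "\<dots> = gauss_binom q n (n - i) * A_fun q m i"
      using card_Sub[of "n - i" n] A_fun_nat[of i m] True nm by simp
    also have "gauss_binom q n (n - i) = gauss_binom q n i" using gauss_sym[of i n q] True q_ge2 by simp
    finally show ?thesis by (simp add: N_rank_def)
  qed
  have "card S = (\<Sum>i\<in>A.dimL ` S. card {ev \<in> S. A.dimL ev = i})" by (rule card_fibers[OF finS])
  hence "real (card S) = (\<Sum>i\<in>A.dimL ` S. real (card {ev \<in> S. A.dimL ev = i}))" by simp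
  also have "\<dots> \<le> (\<Sum>i\<in>A.dimL ` S. N_rank q m n i)" using per by (intro sum_mono) auto
  also have "\<dots> \<le> (\<Sum>i\<le>t. N_rank q m n i)"
    using N_rank_nonneg by (intro sum_mono2) (auto simp: S_def)
  finally show ?thesis unfolding S_def V_ball_def .
qed

end

theorem proposition4:
  fixes C :: "('a::{finite,field}) list set"
    and p e q m n k u :: nat
  assumes "prime p" and "e \<ge> 1" and "q = p ^ e"
    and "card (UNIV :: 'a set) = q ^ m"
    and "C \<subseteq> {x. length x = n}"
    and "replicate n 0 \<in> C"
    and "n \<le> m"
    and "1 \<le> k" and "k \<le> n"
    and "card C = q ^ (m * k)"
    and "min_rank_dist (base_field q) C = n - k + 1"
    and "n - k + 1 - (n - k) div 2 \<le> u" and "u < n - k + 1"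
  shows "real (card {y. length y = n \<and> rk (base_field q) y = u \<and>
                 (\<exists>c\<in>C. rk (base_field q) (vdiff y c) \<le> (n - k) div 2)})
         < real q ^ 2 / (real q ^ 2 - 1) * gauss_binom q n u
           * (real q ^ m - 1) powi (int u - int (n - k))
           * V_ball q m n ((n - k) div 2)"
proof -
  have m1: "m \<ge> 1" using assms(7,8,9) by simp
  interpret ffield p e q m
    using assms(1,2,3,4) m1 by unfold_locales auto
  define t where "t = (n - k) div 2"
  define r where "r = n - k"
  have ur: "u \<le> r" using assms(13) unfolding r_def by simp
  have tu: "t < u" using assms(12) unfolding t_def by simp
  have t1: "t \<ge> 1" using assms(12,13) unfolding t_def by simp
  have tm: "t + 2 \<le> m" using assms(7,8,9) t1 unfolding t_def by simp
  have uk: "u + k \<le> n" using ur assms(9) unfolding r_def by simp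
  have Cn: "C \<subseteq> Ln n" using assms(5) by (simp add: Ln_def)
  have finC: "finite C" using Cn finite_subset[OF _ finite_Ln] by blast
  have dist: "A.dimL (vdiff c c') \<ge> n - k + 1" if cc: "c \<in> C" "c' \<in> C" "c \<noteq> c'" for c c'
  proof -
    let ?M = "{rk FF (vdiff c d) | c d. c \<in> C \<and> d \<in> C \<and> c \<noteq> d}"
    have "?M \<subseteq> (\<lambda>(c, d). rk FF (vdiff c d)) ` (C \<times> C)" by auto
    hence fin: "finite ?M" using finC finite_subset by blast
    have "rk FF (vdiff c c') \<in> ?M" using cc by blast
    hence "Min ?M \<le> rk FF (vdiff c c')" using Min_le[OF fin] by blast
    thus ?thesis using assms(11) unfolding min_rank_dist_def by (simp add: rk_dimL)
  qed
  define D where "D = {y. length y = n \<and> rk FF y = u \<and> (\<exists>c\<in>C. rk FF (vdiff y c) \<le> t)}"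
  define X where "X R = {y \<in> Ln n. Rel y = R \<and> (\<exists>c\<in>C. A.dimL (vdiff y c) \<le> t)}" for R
  define Bc where "Bc = (real q ^ m) ^ t / A_fun q m t / (real q ^ m) ^ (n - u - k)"
  define E where "E = real (card {ev \<in> Ln n. A.dimL ev \<le> t})"
  define G where "G = gauss_binom q n u"
  define V where "V = V_ball q m n t"
  have Dsub: "D \<subseteq> (\<Union>R\<in>Sub n (n - u). X R)"
  proof
    fix y assume "y \<in> D"
    hence y: "length y = n" "rk FF y = u" "\<exists>c\<in>C. rk FF (vdiff y c) \<le> t" unfolding D_def by auto
    have "Rel y \<in> Sub n (n - u)" unfolding Sub_def
      using Rel_subsp[of y] Rel_sub[of y] card_Rel[of y] y by simp
    thus "y \<in> (\<Union>R\<in>Sub n (n - u). X R)" using y unfolding X_def by (auto simp: Ln_def rk_dimL)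
  qed
  have finX: "finite (X R)" for R unfolding X_def using finite_Ln by simp
  have "card D \<le> card (\<Union>R\<in>Sub n (n - u). X R)"
    using finite_Sub finX by (intro card_mono Dsub) auto
  also have "\<dots> \<le> (\<Sum>R\<in>Sub n (n - u). card (X R))" by (rule card_UN_le[OF finite_Sub])
  finally have "real (card D) \<le> (\<Sum>R\<in>Sub n (n - u). real (card (X R)))"
    by (simp only: of_nat_le_iff of_nat_sum[symmetric])
  also have "\<dots> \<le> (\<Sum>R\<in>Sub n (n - u). Bc * E)"
  proof (rule sum_mono)
    fix R assume R: "R \<in> Sub n (n - u)"
    show "real (card (X R)) \<le> Bc * E"
      unfolding X_def Bc_def E_def using XR_bound[OF Cn assms(6) dist uk tu _ R] tm by simp
  qed
  also have "\<dots> = real (card (Sub n (n - u))) * Bc * E" by simp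
  also have "real (card (Sub n (n - u))) = G"
    unfolding G_def using card_Sub[of "n - u" n] gauss_sym[of u n q] uk q_ge2 by simp
  finally have D1: "real (card D) \<le> G * Bc * E" .
  have EV: "E \<le> V" unfolding E_def V_def using E_bound[OF assms(7)] .
  have E1: "E \<ge> 1"
  proof -
    have "q ^ A.dimL (replicate n (0::'a)) = q ^ 0"
      using A.spL_replicate0[of n] A.card_spL[of "replicate n 0"] by simp
    hence "A.dimL (replicate n (0::'a)) = 0" by (rule A.qq_pow_inj)
    hence mem: "replicate n 0 \<in> {ev \<in> Ln n. A.dimL ev \<le> t}" by (simp add: Ln_def)
    have "card {ev \<in> Ln n. A.dimL ev \<le> t} > 0"
      by (subst card_gt_0_iff) (use mem finite_Ln in auto)
    thus ?thesis unfolding E_def by simp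
  qed
  have Gp: "G > 0" unfolding G_def gauss_binom_def using A_fun_pos[of u n] A_fun_pos[of u u] uk by simp
  have Vp: "V > 0" using EV E1 by simp
  define Q where "Q = real q ^ m"
  have Q1: "Q \<ge> 2"
  proof -
    have "q \<le> q ^ m" by (rule self_le_power) (use q_ge2 m1 in auto)
    hence "2 \<le> q ^ m" using q_ge2 by linarith
    hence "real 2 \<le> real (q ^ m)" by (simp only: of_nat_le_iff)
    thus ?thesis by (simp add: Q_def)
  qed
  define x where "x = n - u - k"
  have xr: "int u - int (n - k) = - int x" unfolding x_def using uk by simp
  have K: "Q ^ t / A_fun q m t < real q ^ 2 / (real q ^ 2 - 1)" using K_bound[OF tm] by (simp add: Q_def)
  have pw: "1 / Q ^ x \<le> (Q - 1) powi (int u - int (n - k))"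
  proof -
    have "(Q - 1) ^ x \<le> Q ^ x" using Q1 by (intro power_mono) auto
    moreover have "(Q - 1) ^ x > 0" using Q1 by simp
    ultimately have "1 / Q ^ x \<le> 1 / (Q - 1) ^ x" by (intro divide_left_mono) auto
    thus ?thesis unfolding xr by (simp add: power_int_minus divide_inverse)
  qed
  have Bc_eq: "Bc = (Q ^ t / A_fun q m t) * (1 / Q ^ x)" unfolding Bc_def Q_def x_def by simp
  have Qx: "1 / Q ^ x > 0" using Q1 by simp
  have "Bc < real q ^ 2 / (real q ^ 2 - 1) * (1 / Q ^ x)"
    unfolding Bc_eq using K Qx by (intro mult_strict_right_mono) auto
  also have "\<dots> \<le> real q ^ 2 / (real q ^ 2 - 1) * (Q - 1) powi (int u - int (n - k))"
    using pw q_ge2 by (intro mult_left_mono) auto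
  finally have Bc_lt: "Bc < real q ^ 2 / (real q ^ 2 - 1) * (Q - 1) powi (int u - int (n - k))" .
  have Bc0: "Bc \<ge> 0" unfolding Bc_def using A_fun_pos[of t m] tm by (intro divide_nonneg_nonneg) auto
  have "G * Bc * E \<le> G * Bc * V" using EV Gp Bc0 by (intro mult_left_mono mult_nonneg_nonneg) auto
  with D1 have "real (card D) \<le> G * Bc * V" by linarith
  also have "\<dots> < G * (real q ^ 2 / (real q ^ 2 - 1) * (Q - 1) powi (int u - int (n - k))) * V"
    using Bc_lt Gp Vp by (intro mult_strict_right_mono mult_strict_left_mono) auto
  finally show ?thesis unfolding D_def G_def V_def Q_def t_def by (simp add: mult_ac)
qed

end
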